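(* There is an absolute constant $C>0$ such that the following holds. Let $H_0,H_1$ be Hermitian operators on an $n$-qubit Hilbert space, $H_s=(1-s)H_0+sH_1$, and let $|\alpha_0\rangle,|\alpha_1\rangle$ be normalized ground states of $H_0,H_1$. Let $\mathcal V$ be a subspace spanned by eigenvectors of $H_0$ with $\|\Pi_{\mathcal V}|\alpha_0\rangle\|=1$ and $\|\Pi_{\mathcal V}|\alpha_1\rangle\|\le1/10$, and let $\beta$ be the escape rate of $\mathcal V$ by $H_1$. Then the minimal gap $\Delta=\min_{s\in[0,1]}(\lambda_1(H_s)-\lambda_0(H_s))$ satisfies $$\Delta\le C\,\big(\beta\,\|H_0-H_1\|^3\big)^{1/4}.$$ (The paper states this with $C=100^{1/4}$.)
   Context: Escape rate: for a subspace $\mathcal V$ and Hamiltonian $H$, the escape rate of $\mathcal V$ by $H$ is $\beta=\max_{v\in\mathcal V,\|v\|=1}\|\Pi_{\mathcal V^\perp}H|v\rangle\|$, with $\Pi_{\mathcal V}$ the orthogonal projection onto $\mathcal V$. $\lambda_0(H)\le\lambda_1(H)$ denote the two smallest eigenvalues of $H$ counted with multiplicity. *)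

theory Defs
  imports "Jordan_Normal_Form.Char_Poly" "Jordan_Normal_Form.Conjugate"
begin

text \<open>Complex N x N matrices (JNF type complex mat), N = 2^n for n qubits.\<close>

definition hermitian :: "nat \<Rightarrow> complex mat \<Rightarrow> bool" where
  "hermitian N A \<longleftrightarrow> A \<in> carrier_mat N N \<and>
     (\<forall>i<N. \<forall>j<N. A $$ (i,j) = cnj (A $$ (j,i)))"

definition vnorm :: "complex vec \<Rightarrow> real" where
  "vnorm v = sqrt (Re (v \<bullet>c v))"

definition opnorm :: "complex mat \<Rightarrow> real" where
  "opnorm A = Sup {vnorm (A *\<^sub>v v) | v. v \<in> carrier_vec (dim_col A) \<and> vnorm v = 1}"

definition lincomb :: "nat \<Rightarrow> complex list \<Rightarrow> complex vec list \<Rightarrow> complex vec" where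
  "lincomb N cs ws = foldr (\<lambda>(c,w) acc. c \<cdot>\<^sub>v w + acc) (zip cs ws) (0\<^sub>v N)"

definition cspan :: "nat \<Rightarrow> complex vec set \<Rightarrow> complex vec set" where
  "cspan N S = {lincomb N cs ws | cs ws. set ws \<subseteq> S \<and> length cs = length ws}"

definition ocomp :: "nat \<Rightarrow> complex vec set \<Rightarrow> complex vec set" where
  "ocomp N V = {x \<in> carrier_vec N. \<forall>y\<in>V. x \<bullet>c y = 0}"

definition proj :: "nat \<Rightarrow> complex vec set \<Rightarrow> complex vec \<Rightarrow> complex vec" where
  "proj N V v = (THE w. w \<in> V \<and> v - w \<in> ocomp N V)"

definition escape_rate :: "nat \<Rightarrow> complex vec set \<Rightarrow> complex mat \<Rightarrow> real" where
  "escape_rate N V H = Sup {vnorm (proj N (ocomp N V) (H *\<^sub>v v)) | v. v \<in> V \<and> vnorm v = 1}"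

text \<open>Eigenvalues counted with (algebraic) multiplicity: eig_count H x is the number
  of eigenvalues with real part at most x; lam H k is the (k+1)-th smallest eigenvalue
  (k = 0, 1, ...), i.e. lam H 0 \<le> lam H 1 are the two smallest.\<close>
definition eig_count :: "complex mat \<Rightarrow> real \<Rightarrow> nat" where
  "eig_count H x = (\<Sum>e\<in>{e. poly (char_poly H) e = 0 \<and> Re e \<le> x}. order e (char_poly H))"

definition lam :: "complex mat \<Rightarrow> nat \<Rightarrow> real" where
  "lam H k = Inf {x. k < eig_count H x}"

definition ground_state :: "nat \<Rightarrow> complex mat \<Rightarrow> complex vec \<Rightarrow> bool" where
  "ground_state N H a \<longleftrightarrow> a \<in> carrier_vec N \<and> vnorm a = 1 \<and>
     H *\<^sub>v a = complex_of_real (lam H 0) \<cdot>\<^sub>v a"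

definition interp :: "complex mat \<Rightarrow> complex mat \<Rightarrow> real \<Rightarrow> complex mat" where
  "interp H0 H1 s = complex_of_real (1 - s) \<cdot>\<^sub>m H0 + complex_of_real s \<cdot>\<^sub>m H1"

end

theory Submission
  imports Defs
begin

definition adj :: "complex mat \<Rightarrow> complex mat" where
  "adj A = mat (dim_col A) (dim_row A) (\<lambda>(i,j). cnj (A $$ (j,i)))"

lemma adj_carrier[simp]: "A \<in> carrier_mat m n \<Longrightarrow> adj A \<in> carrier_mat n m"
  by (auto simp: adj_def)

lemma adj_dims[simp]: "dim_row (adj A) = dim_col A" "dim_col (adj A) = dim_row A"
  by (auto simp: adj_def)

lemma adj_index[simp]: "i < dim_col A \<Longrightarrow> j < dim_row A \<Longrightarrow> adj A $$ (i,j) = cnj (A $$ (j,i))"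
  by (auto simp: adj_def)

lemma adj_adj[simp]: "adj (adj A) = A"
  by (rule eq_matI, auto)

lemma sprod_sum: "w \<in> carrier_vec n \<Longrightarrow> v \<bullet> w = (\<Sum>i<n. v $ i * w $ i)"
  by (auto simp: scalar_prod_def atLeast0LessThan)

lemma cprod_sum: "w \<in> carrier_vec n \<Longrightarrow> v \<bullet>c w = (\<Sum>i<n. v $ i * cnj (w $ i))"
  by (auto simp: scalar_prod_def atLeast0LessThan)

lemma mult_index_sum: "A \<in> carrier_mat m k \<Longrightarrow> B \<in> carrier_mat k n \<Longrightarrow> i < m \<Longrightarrow> j < n \<Longrightarrow>
   (A * B) $$ (i,j) = (\<Sum>l<k. A $$ (i,l) * B $$ (l,j))"
  by (auto simp: scalar_prod_def atLeast0LessThan)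

lemma mult_vec_index_sum: "A \<in> carrier_mat m k \<Longrightarrow> v \<in> carrier_vec k \<Longrightarrow> i < m \<Longrightarrow>
   (A *\<^sub>v v) $ i = (\<Sum>l<k. A $$ (i,l) * v $ l)"
  by (auto simp: scalar_prod_def atLeast0LessThan)

lemma adj_mult: assumes "A \<in> carrier_mat m k" "B \<in> carrier_mat k n"
  shows "adj (A * B) = adj B * adj A"
proof (rule eq_matI)
  fix i j assume "i < dim_row (adj B * adj A)" "j < dim_col (adj B * adj A)"
  hence ij: "i < n" "j < m" using assms by auto
  have "adj (A * B) $$ (i,j) = cnj ((A*B) $$ (j,i))" using ij assms by simp
  also have "(A*B) $$ (j,i) = (\<Sum>l<k. A $$ (j,l) * B $$ (l,i))"
    using ij assms by (intro mult_index_sum)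
  also have "cnj (\<Sum>l<k. A $$ (j,l) * B $$ (l,i)) = (\<Sum>l<k. adj B $$ (i,l) * adj A $$ (l,j))"
    using ij assms by (auto simp: mult.commute intro!: sum.cong)
  also have "\<dots> = (adj B * adj A) $$ (i,j)"
    using ij assms by (intro mult_index_sum[symmetric], auto)
  finally show "adj (A * B) $$ (i,j) = (adj B * adj A) $$ (i,j)" .
qed (insert assms, auto)

lemma adj_one[simp]: "adj (1\<^sub>m n) = 1\<^sub>m n"
  by (rule eq_matI, auto)

lemma hermitian_adj: assumes h: "hermitian N A" shows "adj A = A"
proof -
  have A: "A \<in> carrier_mat N N" and e: "\<And>i j. i < N \<Longrightarrow> j < N \<Longrightarrow> A $$ (i,j) = cnj (A $$ (j,i))"
    using h unfolding hermitian_def by blast+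
  show ?thesis
  proof (rule eq_matI)
    fix i j assume "i < dim_row A" "j < dim_col A"
    hence ij: "i < N" "j < N" using A by auto
    have "adj A $$ (i,j) = cnj (A $$ (j,i))" using ij A by simp
    also have "\<dots> = A $$ (i,j)" using e[OF ij] by simp
    finally show "adj A $$ (i,j) = A $$ (i,j)" .
  qed (insert A, auto)
qed

lemma adj_hermitian: assumes A: "A \<in> carrier_mat N N" and h: "adj A = A" shows "hermitian N A"
  unfolding hermitian_def
proof (intro conjI allI impI A)
  fix i j assume "i < N" "j < N"
  hence "adj A $$ (i,j) = cnj (A $$ (j,i))" using A by simp
  thus "A $$ (i,j) = cnj (A $$ (j,i))" using h by simp
qed

lemma cprod_mult: assumes A: "A \<in> carrier_mat n m" and x: "x \<in> carrier_vec m" and y: "y \<in> carrier_vec n"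
  shows "(A *\<^sub>v x) \<bullet>c y = x \<bullet>c (adj A *\<^sub>v y)"
proof -
  have "(A *\<^sub>v x) \<bullet>c y = (\<Sum>i<n. (A *\<^sub>v x) $ i * cnj (y $ i))"
    using y by (rule cprod_sum)
  also have "\<dots> = (\<Sum>i<n. (\<Sum>l<m. A $$ (i,l) * x $ l) * cnj (y $ i))"
    using A x y by (intro sum.cong, auto simp: mult_vec_index_sum[OF A x] simp del: index_mult_mat_vec)
  also have "\<dots> = (\<Sum>l<m. \<Sum>i<n. x $ l * (A $$ (i,l) * cnj (y $ i)))"
    by (subst sum.swap, simp add: sum_distrib_left sum_distrib_right mult_ac)
  also have "\<dots> = (\<Sum>l<m. x $ l * cnj ((adj A *\<^sub>v y) $ l))"
    using A x y by (intro sum.cong, auto simp: mult_vec_index_sum[OF adj_carrier[OF A] y] sum_distrib_left simp del: index_mult_mat_vec)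
  also have "\<dots> = x \<bullet>c (adj A *\<^sub>v y)"
    by (rule cprod_sum[symmetric], rule carrier_vecI, insert A, simp)
  finally show ?thesis .
qed

lemma cprod_cnj: fixes x y :: "complex vec" shows "x \<in> carrier_vec n \<Longrightarrow> y \<in> carrier_vec n \<Longrightarrow> y \<bullet>c x = cnj (x \<bullet>c y)"
  by (simp add: cprod_sum[of _ n] mult.commute)

lemma cprod_add_left: fixes x y z :: "complex vec" assumes "x \<in> carrier_vec n" "y \<in> carrier_vec n" "z \<in> carrier_vec n"
  shows "(x + y) \<bullet>c z = x \<bullet>c z + y \<bullet>c z"
  by (rule add_scalar_prod_distrib, insert assms, auto)

lemma cprod_add_right: fixes x y z :: "complex vec" assumes "x \<in> carrier_vec n" "y \<in> carrier_vec n" "z \<in> carrier_vec n"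
  shows "z \<bullet>c (x + y) = z \<bullet>c x + z \<bullet>c y"
proof -
  have "conjugate (x+y) = conjugate x + conjugate y" by (rule conjugate_add_vec[OF assms(1,2)])
  thus ?thesis using assms by (simp, intro scalar_prod_add_distrib, auto)
qed

lemma cprod_minus_left: fixes x y z :: "complex vec" assumes "x \<in> carrier_vec n" "y \<in> carrier_vec n" "z \<in> carrier_vec n"
  shows "(x - y) \<bullet>c z = x \<bullet>c z - y \<bullet>c z"
  by (rule minus_scalar_prod_distrib, insert assms, auto)

lemma cprod_minus_right: fixes x y z :: "complex vec" assumes "x \<in> carrier_vec n" "y \<in> carrier_vec n" "z \<in> carrier_vec n"
  shows "z \<bullet>c (x - y) = z \<bullet>c x - z \<bullet>c y"
proof -
  have "conjugate (x - y) = conjugate x - conjugate y"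
    using assms by (intro eq_vecI, auto)
  thus ?thesis using assms by (simp, intro scalar_prod_minus_distrib, auto)
qed

lemma cprod_smult_left: fixes x y z :: "complex vec" assumes "x \<in> carrier_vec n" "z \<in> carrier_vec n"
  shows "(a \<cdot>\<^sub>v x) \<bullet>c z = a * (x \<bullet>c z)"
  using assms by simp

lemma cprod_smult_right: fixes x y z :: "complex vec" assumes "x \<in> carrier_vec n" "z \<in> carrier_vec n"
  shows "z \<bullet>c (a \<cdot>\<^sub>v x) = cnj a * (z \<bullet>c x)"
  using assms by (simp add: conjugate_smult_vec)

lemma cprod_zero_left[simp]: "z \<in> carrier_vec n \<Longrightarrow> 0\<^sub>v n \<bullet>c z = 0"
  by (simp add: cprod_sum[of _ n])

lemma cprod_zero_right[simp]: "z \<in> carrier_vec n \<Longrightarrow> z \<bullet>c 0\<^sub>v n = 0"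
  by (simp add: cprod_sum[of _ n])

lemma cprod_self: assumes x: "x \<in> carrier_vec n" shows "x \<bullet>c x = of_real (\<Sum>i<n. (cmod (x $ i))^2)"
  unfolding cprod_sum[OF x] of_real_sum by (rule sum.cong, simp, rule complex_norm_square[symmetric])

lemma nsq_nonneg: assumes x: "x \<in> carrier_vec n" shows "Re (x \<bullet>c x) \<ge> 0"
proof -
  have "Re (x \<bullet>c x) = (\<Sum>i<n. (cmod (x $ i))^2)" unfolding cprod_self[OF x] by simp
  thus ?thesis by (simp add: sum_nonneg)
qed

lemma cprod_self_real: assumes x: "x \<in> carrier_vec n" shows "x \<bullet>c x = of_real (Re (x \<bullet>c x))"
  by (simp add: cprod_self[OF x])

lemma vnorm_sq: assumes x: "x \<in> carrier_vec n" shows "(vnorm x)^2 = Re (x \<bullet>c x)"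
  unfolding vnorm_def using nsq_nonneg[OF x] by simp

lemma vnorm_nonneg: "vnorm x \<ge> 0"
  unfolding vnorm_def using nsq_nonneg[OF carrier_vec_dim_vec] by simp

lemma vnorm_zero_iff: "x \<in> carrier_vec n \<Longrightarrow> vnorm x = 0 \<longleftrightarrow> x = 0\<^sub>v n"
proof -
  assume x: "x \<in> carrier_vec n"
  have "vnorm x = 0 \<longleftrightarrow> Re (x \<bullet>c x) = 0" unfolding vnorm_def using nsq_nonneg[OF x] by simp
  also have "\<dots> \<longleftrightarrow> x \<bullet>c x = 0"
  proof
    assume "Re (x \<bullet>c x) = 0"
    hence "of_real (Re (x \<bullet>c x)) = (0::complex)" by simp
    with cprod_self_real[OF x] show "x \<bullet>c x = 0" by (rule trans)
  qed simp
  also have "\<dots> \<longleftrightarrow> x = 0\<^sub>v n" using conjugate_square_eq_0_vec[OF x] by simp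
  finally show ?thesis .
qed

lemma vnorm_smult: "x \<in> carrier_vec n \<Longrightarrow> vnorm (a \<cdot>\<^sub>v x) = cmod a * vnorm x"
proof -
  assume x: "x \<in> carrier_vec n"
  have "Re ((a \<cdot>\<^sub>v x) \<bullet>c (a \<cdot>\<^sub>v x)) = (cmod a)^2 * Re (x \<bullet>c x)"
  proof -
    have "(a \<cdot>\<^sub>v x) \<bullet>c (a \<cdot>\<^sub>v x) = (a * cnj a) * (x \<bullet>c x)"
      using x by (simp add: cprod_smult_left[of _ n] cprod_smult_right[of _ n])
    also have "\<dots> = of_real ((cmod a)^2 * Re (x \<bullet>c x))"
      by (subst cprod_self_real[OF x], simp add: complex_norm_square[symmetric])
    finally show ?thesis by simp
  qed
  thus ?thesis unfolding vnorm_def by (simp add: real_sqrt_mult)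
qed

lemma index_le_vnorm: "x \<in> carrier_vec n \<Longrightarrow> i < n \<Longrightarrow> cmod (x $ i) \<le> vnorm x"
proof -
  assume x: "x \<in> carrier_vec n" and i: "i < n"
  have "(cmod (x $ i))^2 \<le> (\<Sum>j<n. (cmod (x $ j))^2)"
    by (rule member_le_sum[of i "{..<n}" "\<lambda>j. (cmod (x $ j))^2"], insert i, auto)
  also have "\<dots> = (vnorm x)^2" using vnorm_sq[OF x] cprod_self[OF x] by simp
  finally show ?thesis using vnorm_nonneg by (simp add: abs_le_square_iff)
qed

lemma herm_cprod: assumes "hermitian N A" "x \<in> carrier_vec N" "y \<in> carrier_vec N"
  shows "(A *\<^sub>v x) \<bullet>c y = x \<bullet>c (A *\<^sub>v y)"
  using cprod_mult[of A N N x y] hermitian_adj[OF assms(1)] assms unfolding hermitian_def by auto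

lemma herm_rq_real: assumes "hermitian N A" "x \<in> carrier_vec N"
  shows "(A *\<^sub>v x) \<bullet>c x = of_real (Re ((A *\<^sub>v x) \<bullet>c x))"
proof -
  have AN: "A \<in> carrier_mat N N" using assms unfolding hermitian_def by auto
  have "(A *\<^sub>v x) \<bullet>c x = cnj ((A *\<^sub>v x) \<bullet>c x)"
    using herm_cprod[OF assms(1,2,2)] cprod_cnj[of "A *\<^sub>v x" N x] AN assms by auto
  thus ?thesis by (metis Reals_cnj_iff complex_is_Real_iff of_real_Re)
qed

lemma cprod_expand: assumes x: "x \<in> carrier_vec n" and y: "y \<in> carrier_vec n"
  shows "(x - c \<cdot>\<^sub>v y) \<bullet>c (x - c \<cdot>\<^sub>v y) =
     x \<bullet>c x - cnj c * (x \<bullet>c y) - c * (y \<bullet>c x) + c * cnj c * (y \<bullet>c y)"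
proof -
  have cy: "c \<cdot>\<^sub>v y \<in> carrier_vec n" using y by simp
  have d: "x - c \<cdot>\<^sub>v y \<in> carrier_vec n" using x y by simp
  have "(x - c \<cdot>\<^sub>v y) \<bullet>c (x - c \<cdot>\<^sub>v y) = x \<bullet>c (x - c \<cdot>\<^sub>v y) - (c \<cdot>\<^sub>v y) \<bullet>c (x - c \<cdot>\<^sub>v y)"
    by (rule cprod_minus_left[OF x cy d])
  also have "x \<bullet>c (x - c \<cdot>\<^sub>v y) = x \<bullet>c x - x \<bullet>c (c \<cdot>\<^sub>v y)" by (rule cprod_minus_right[OF x cy x])
  also have "(c \<cdot>\<^sub>v y) \<bullet>c (x - c \<cdot>\<^sub>v y) = c * (y \<bullet>c (x - c \<cdot>\<^sub>v y))" by (rule cprod_smult_left[OF y d])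
  also have "y \<bullet>c (x - c \<cdot>\<^sub>v y) = y \<bullet>c x - y \<bullet>c (c \<cdot>\<^sub>v y)" by (rule cprod_minus_right[OF x cy y])
  also have "x \<bullet>c (c \<cdot>\<^sub>v y) = cnj c * (x \<bullet>c y)" by (rule cprod_smult_right[OF y x])
  also have "y \<bullet>c (c \<cdot>\<^sub>v y) = cnj c * (y \<bullet>c y)" by (rule cprod_smult_right[OF y y])
  finally show ?thesis by (simp add: algebra_simps)
qed

lemma cauchy_schwarz: assumes x: "x \<in> carrier_vec n" and y: "y \<in> carrier_vec n"
  shows "cmod (x \<bullet>c y) \<le> vnorm x * vnorm y"
proof (cases "y = 0\<^sub>v n")
  case True thus ?thesis using x by (simp add: vnorm_nonneg)
next
  case False
  define q where "q = Re (y \<bullet>c y)"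
  have "vnorm y \<noteq> 0" using vnorm_zero_iff[OF y] False by auto
  hence q: "q > 0" using vnorm_sq[OF y] vnorm_nonneg[of y] unfolding q_def
    by (metis less_eq_real_def zero_less_power2)
  define p where "p = x \<bullet>c y"
  define c where "c = p / of_real q"
  have yy: "y \<bullet>c y = of_real q" unfolding q_def by (rule cprod_self_real[OF y])
  have yx: "y \<bullet>c x = cnj p" unfolding p_def by (rule cprod_cnj[OF x y])
  have pp: "p * cnj p = of_real ((cmod p)^2)" by (rule complex_norm_square[symmetric])
  have "0 \<le> Re ((x - c \<cdot>\<^sub>v y) \<bullet>c (x - c \<cdot>\<^sub>v y))" by (rule nsq_nonneg[of _ n], insert x y, auto)
  also have "(x - c \<cdot>\<^sub>v y) \<bullet>c (x - c \<cdot>\<^sub>v y) = x \<bullet>c x - of_real ((cmod p)^2 / q)"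
  proof -
    have "cnj c * (x \<bullet>c y) = of_real ((cmod p)^2 / q)" unfolding c_def p_def[symmetric]
      using pp q by (simp add: field_simps mult.commute)
    moreover have "c * (y \<bullet>c x) = of_real ((cmod p)^2 / q)" unfolding c_def yx
      using pp q by (simp add: field_simps)
    moreover have "c * cnj c * (y \<bullet>c y) = of_real ((cmod p)^2 / q)" unfolding c_def yy
      using pp q by (simp add: field_simps power2_eq_square)
    ultimately show ?thesis unfolding cprod_expand[OF x y] by simp
  qed
  finally have "(cmod p)^2 / q \<le> Re (x \<bullet>c x)" by simp
  hence "(cmod p)^2 \<le> Re (x \<bullet>c x) * q" using q by (simp add: divide_le_eq)
  also have "\<dots> = (vnorm x * vnorm y)^2" unfolding q_def vnorm_sq[OF x, symmetric] vnorm_sq[OF y, symmetric]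
    by (simp add: power_mult_distrib)
  finally have "(cmod p)^2 \<le> (vnorm x * vnorm y)^2" .
  thus ?thesis unfolding p_def by (rule power2_le_imp_le, simp add: vnorm_nonneg)
qed

lemma vnorm_sum_sq: "x \<in> carrier_vec n \<Longrightarrow> (vnorm x)^2 = (\<Sum>i<n. (cmod (x $ i))^2)"
  using vnorm_sq cprod_self by (metis Re_complex_of_real)

definition fro :: "complex mat \<Rightarrow> real" where
  "fro A = sqrt (\<Sum>i<dim_row A. \<Sum>j<dim_col A. (cmod (A $$ (i,j)))^2)"

lemma fro_nonneg: "fro A \<ge> 0" unfolding fro_def by (simp add: sum_nonneg)

lemma mat_vec_bound: assumes A: "A \<in> carrier_mat m k" and x: "x \<in> carrier_vec k"
  shows "vnorm (A *\<^sub>v x) \<le> fro A * vnorm x"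
proof -
  define r where "r i = vec k (\<lambda>l. cnj (A $$ (i,l)))" for i
  have r: "r i \<in> carrier_vec k" for i unfolding r_def by simp
  have Axi: "(A *\<^sub>v x) $ i = x \<bullet>c r i" if "i < m" for i
  proof -
    have "(A *\<^sub>v x) $ i = (\<Sum>l<k. A $$ (i,l) * x $ l)" by (rule mult_vec_index_sum[OF A x that])
    also have "\<dots> = (\<Sum>l<k. x $ l * cnj (r i $ l))" by (rule sum.cong, auto simp: r_def)
    also have "\<dots> = x \<bullet>c r i" by (rule cprod_sum[OF r, symmetric])
    finally show ?thesis .
  qed
  have ri: "(vnorm (r i))^2 = (\<Sum>l<k. (cmod (A $$ (i,l)))^2)" for i
    unfolding vnorm_sum_sq[OF r] by (auto simp: r_def intro!: sum.cong)
  have "(vnorm (A *\<^sub>v x))^2 = (\<Sum>i<m. (cmod ((A *\<^sub>v x) $ i))^2)"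
    by (rule vnorm_sum_sq[OF mult_mat_vec_carrier[OF A x]])
  also have "\<dots> \<le> (\<Sum>i<m. (vnorm x)^2 * (vnorm (r i))^2)"
  proof (rule sum_mono)
    fix i assume "i \<in> {..<m}"
    hence "cmod ((A *\<^sub>v x) $ i) \<le> vnorm x * vnorm (r i)" using Axi cauchy_schwarz[OF x r] by auto
    thus "(cmod ((A *\<^sub>v x) $ i))^2 \<le> (vnorm x)^2 * (vnorm (r i))^2"
      by (metis norm_ge_zero power_mono power_mult_distrib)
  qed
  also have "\<dots> = (vnorm x)^2 * (fro A)^2"
    using A unfolding fro_def ri by (simp add: sum_distrib_left sum_nonneg)
  finally have "(vnorm (A *\<^sub>v x))^2 \<le> (fro A * vnorm x)^2" by (simp add: power_mult_distrib mult.commute)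
  thus ?thesis by (rule power2_le_imp_le, simp add: fro_nonneg vnorm_nonneg)
qed

lemma rq_bound: assumes A: "A \<in> carrier_mat n n" and x: "x \<in> carrier_vec n"
  shows "cmod ((A *\<^sub>v x) \<bullet>c x) \<le> fro A * (vnorm x)^2"
proof -
  have "cmod ((A *\<^sub>v x) \<bullet>c x) \<le> vnorm (A *\<^sub>v x) * vnorm x"
    by (rule cauchy_schwarz, insert A x, auto)
  also have "\<dots> \<le> fro A * vnorm x * vnorm x"
    by (rule mult_right_mono[OF mat_vec_bound[OF A x] vnorm_nonneg])
  finally show ?thesis by (simp add: power2_eq_square mult.assoc)
qed

lemma pythagoras: assumes x: "x \<in> carrier_vec n" and y: "y \<in> carrier_vec n" and o: "x \<bullet>c y = 0"
  shows "(vnorm (x + y))^2 = (vnorm x)^2 + (vnorm y)^2"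
proof -
  have o2: "y \<bullet>c x = 0" using cprod_cnj[OF x y] o by simp
  have "(x + y) \<bullet>c (x + y) = x \<bullet>c x + y \<bullet>c y"
    using x y o o2 by (simp add: cprod_add_left[of _ n] cprod_add_right[of _ n])
  thus ?thesis using x y by (simp add: vnorm_sq[of _ n])
qed

definition unitary :: "nat \<Rightarrow> complex mat \<Rightarrow> bool" where
  "unitary n U \<longleftrightarrow> U \<in> carrier_mat n n \<and> adj U * U = 1\<^sub>m n \<and> U * adj U = 1\<^sub>m n"

definition diagm :: "nat \<Rightarrow> (nat \<Rightarrow> real) \<Rightarrow> complex mat" where
  "diagm n d = mat n n (\<lambda>(i,j). if i = j then complex_of_real (d i) else 0)"

lemma diagm_carrier[simp]: "diagm n d \<in> carrier_mat n n" by (simp add: diagm_def)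

definition ext :: "complex \<Rightarrow> complex mat \<Rightarrow> complex mat" where
  "ext a X = mat (Suc (dim_row X)) (Suc (dim_col X)) (\<lambda>(i,j). if i = 0 then (if j = 0 then a else 0)
      else if j = 0 then 0 else X $$ (i - 1, j - 1))"

lemma ext_carrier[simp]: "X \<in> carrier_mat m k \<Longrightarrow> ext a X \<in> carrier_mat (Suc m) (Suc k)"
  by (auto simp: ext_def)

lemma ext_index: "X \<in> carrier_mat m k \<Longrightarrow> i < Suc m \<Longrightarrow> j < Suc k \<Longrightarrow>
  ext a X $$ (i,j) = (if i = 0 then (if j = 0 then a else 0) else if j = 0 then 0 else X $$ (i - 1, j - 1))"
  by (auto simp: ext_def)

lemma ext_mult: assumes X: "X \<in> carrier_mat m k" and Y: "Y \<in> carrier_mat k n"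
  shows "ext a X * ext b Y = ext (a * b) (X * Y)"
proof (rule eq_matI)
  fix i j assume "i < dim_row (ext (a * b) (X * Y))" "j < dim_col (ext (a * b) (X * Y))"
  hence ij: "i < Suc m" "j < Suc n" using X Y by (auto simp: ext_def)
  have "(ext a X * ext b Y) $$ (i,j) = (\<Sum>l<Suc k. ext a X $$ (i,l) * ext b Y $$ (l,j))"
    by (rule mult_index_sum[OF ext_carrier[OF X] ext_carrier[OF Y] ij])
  also have "\<dots> = ext a X $$ (i,0) * ext b Y $$ (0,j) + (\<Sum>l<k. ext a X $$ (i,Suc l) * ext b Y $$ (Suc l,j))"
    by (rule sum.lessThan_Suc_shift)
  also have "\<dots> = ext (a * b) (X * Y) $$ (i,j)"
  proof (cases "i = 0")
    case True
    thus ?thesis using ij X Y by (simp add: ext_index[OF X] ext_index[OF Y] ext_index[OF mult_carrier_mat[OF X Y]])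
  next
    case False
    then obtain i' where i': "i = Suc i'" by (cases i, auto)
    show ?thesis
    proof (cases "j = 0")
      case True
      thus ?thesis using ij X Y i' by (simp add: ext_index[OF X] ext_index[OF Y] ext_index[OF mult_carrier_mat[OF X Y]])
    next
      case False
      then obtain j' where j': "j = Suc j'" by (cases j, auto)
      have "(X * Y) $$ (i', j') = (\<Sum>l<k. X $$ (i',l) * Y $$ (l,j'))"
        by (rule mult_index_sum[OF X Y], insert ij i' j', auto)
      thus ?thesis using ij X Y i' j' by (simp add: ext_index[OF X] ext_index[OF Y] ext_index[OF mult_carrier_mat[OF X Y]])
    qed
  qed
  finally show "(ext a X * ext b Y) $$ (i,j) = ext (a * b) (X * Y) $$ (i,j)" .
qed (insert X Y, auto simp: ext_def)

lemma adj_ext: assumes X: "X \<in> carrier_mat m k" shows "adj (ext a X) = ext (cnj a) (adj X)"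
  by (rule eq_matI, insert X, auto simp: ext_def adj_def)

lemma ext_one: "ext 1 (1\<^sub>m m) = 1\<^sub>m (Suc m)"
  by (rule eq_matI, auto simp: ext_def)

lemma ext_diag: "ext (of_real r) (diagm m d) = diagm (Suc m) (\<lambda>i. if i = 0 then r else d (i - 1))"
  by (rule eq_matI, auto simp: ext_def diagm_def)

lemma sum_delta_left: fixes i N :: nat assumes "i < N" shows "(\<Sum>l<N. (if i = l then 1 else 0) * f l) = (f i :: complex)"
proof -
  have "(\<Sum>l<N. (if i = l then 1 else 0) * f l) = (\<Sum>l<N. if l = i then f l else 0)" by (rule sum.cong, auto)
  also have "\<dots> = f i" using assms by (subst sum.delta, auto)
  finally show ?thesis .
qed

lemma sum_delta_right: fixes j N :: nat assumes "j < N" shows "(\<Sum>l<N. f l * (if l = j then 1 else 0)) = (f j :: complex)"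
proof -
  have "(\<Sum>l<N. f l * (if l = j then 1 else 0)) = (\<Sum>l<N. if l = j then f l else 0)" by (rule sum.cong, auto)
  also have "\<dots> = f j" using assms by (subst sum.delta, auto)
  finally show ?thesis .
qed

lemma householder:
  assumes v: "v \<in> carrier_vec N" and N: "0 < N" and nv: "vnorm v = 1" and re: "Im (v $ 0) = 0"
  shows "\<exists>R. unitary N R \<and> (\<forall>i<N. R $$ (i,0) = v $ i)"
proof (cases "v = unit_vec N 0")
  case True
  show ?thesis by (rule exI[of _ "1\<^sub>m N"], insert N, auto simp: unitary_def True)
next
  case False
  define e where "e = (unit_vec N 0 :: complex vec)"
  have e: "e \<in> carrier_vec N" unfolding e_def by simp
  define w where "w = v - e"
  have w: "w \<in> carrier_vec N" unfolding w_def using v e by simp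
  define r where "r = Re (v $ 0)"
  have v0: "v $ 0 = of_real r" using re by (simp add: r_def complex_eq_iff)
  have vv: "v \<bullet>c v = 1" using cprod_self_real[OF v] vnorm_sq[OF v] nv by simp
  have ve: "v \<bullet>c e = of_real r"
  proof -
    have "v \<bullet>c e = (\<Sum>l<N. v $ l * cnj (e $ l))" by (rule cprod_sum[OF e])
    also have "\<dots> = (\<Sum>l<N. v $ l * (if l = 0 then 1 else 0))"
      by (rule sum.cong, auto simp: e_def)
    also have "\<dots> = v $ 0" using N by (rule sum_delta_right)
    finally show ?thesis using v0 by simp
  qed
  have ev: "e \<bullet>c v = of_real r" using cprod_cnj[OF v e] ve by simp
  have ee: "e \<bullet>c e = 1" using N by (simp add: cprod_sum[OF e] e_def sum_delta_right)
  have ww: "w \<bullet>c w = of_real (2 - 2 * r)"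
  proof -
    have "w \<bullet>c w = v \<bullet>c (v - e) - e \<bullet>c (v - e)" unfolding w_def
      by (rule cprod_minus_left[OF v e], insert v e, simp)
    also have "\<dots> = (v \<bullet>c v - v \<bullet>c e) - (e \<bullet>c v - e \<bullet>c e)"
      by (simp add: cprod_minus_right[OF v e v] cprod_minus_right[OF v e e])
    finally show ?thesis using vv ve ev ee by simp
  qed
  have "w \<noteq> 0\<^sub>v N"
  proof
    assume w0: "w = 0\<^sub>v N"
    have "v = e"
    proof (rule eq_vecI)
      fix i assume "i < dim_vec e"
      hence i: "i < N" using e by simp
      from arg_cong[OF w0, of "\<lambda>x. x $ i"] have "v $ i - e $ i = 0" using v e i by (simp add: w_def)
      thus "v $ i = e $ i" by simp
    qed (insert v e, simp)
    with False show False by (simp add: e_def)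
  qed
  hence "w \<bullet>c w \<noteq> 0" using conjugate_square_eq_0_vec[OF w] by simp
  hence r1: "r \<noteq> 1" using ww by auto
  define t where "t = 1 / (1 - r)"
  have r1': "1 - r \<noteq> 0" using r1 by simp
  have tr: "t * (2 - 2 * r) = 2" unfolding t_def using r1' by (simp add: field_simps)
  have tr2: "t * (r - 1) = - 1" unfolding t_def using r1' by (simp add: field_simps)
  have t2: "of_real t * (w \<bullet>c w) = 2" unfolding ww of_real_mult[symmetric] tr by simp
  define a where "a i j = of_real t * w $ i * cnj (w $ j)" for i j
  define R where "R = mat N N (\<lambda>(i,j). (if i = j then 1 else 0) - a i j)"
  have R: "R \<in> carrier_mat N N" unfolding R_def by simp
  have adjR: "adj R = R"
    by (rule eq_matI, auto simp: R_def a_def)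
  have RR: "R * R = 1\<^sub>m N"
  proof (rule eq_matI)
    fix i j assume "i < dim_row (1\<^sub>m N)" "j < dim_col (1\<^sub>m N)"
    hence ij: "i < N" "j < N" by auto
    have "(R * R) $$ (i,j) = (\<Sum>l<N. ((if i = l then 1 else 0) - a i l) * ((if l = j then 1 else 0) - a l j))"
      using mult_index_sum[OF R R ij] ij by (simp add: R_def)
    also have "\<dots> = (\<Sum>l<N. (if i = l then 1 else 0) * (if l = j then 1 else 0)) - (\<Sum>l<N. (if i = l then 1 else 0) * a l j)
       - (\<Sum>l<N. a i l * (if l = j then 1 else 0)) + (\<Sum>l<N. a i l * a l j)"
      by (simp add: algebra_simps sum.distrib sum_subtractf)
    also have "(\<Sum>l<N. (if i = l then 1 else 0) * (if l = j then 1 else 0)) = (if i = j then 1 else (0::complex))"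
      using sum_delta_left[OF ij(1), of "\<lambda>l. if l = j then 1 else 0"] by blast
    also have "(\<Sum>l<N. (if i = l then 1 else 0) * a l j) = a i j" by (rule sum_delta_left[OF ij(1)])
    also have "(\<Sum>l<N. a i l * (if l = j then 1 else 0)) = a i j" by (rule sum_delta_right[OF ij(2)])
    also have "(\<Sum>l<N. a i l * a l j) = of_real t * w $ i * cnj (w $ j) * (of_real t * (w \<bullet>c w))"
      unfolding a_def cprod_sum[OF w] by (simp add: sum_distrib_left algebra_simps)
    also have "\<dots> = 2 * a i j" unfolding t2 a_def by simp
    finally show "(R * R) $$ (i,j) = 1\<^sub>m N $$ (i,j)" using ij by simp
  qed (insert R, auto)
  have col: "R $$ (i,0) = v $ i" if i: "i < N" for i
  proof -
    have w0: "cnj (w $ 0) = of_real (r - 1)" unfolding w_def using N v e v0 by (simp add: e_def)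
    have "R $$ (i,0) = (if i = 0 then 1 else 0) - of_real t * w $ i * of_real (r - 1)"
      using i N w0 by (simp add: R_def a_def)
    also have "of_real t * w $ i * of_real (r - 1) = of_real (t * (r - 1)) * w $ i"
      by (simp only: of_real_mult mult_ac)
    also have "\<dots> = - w $ i" unfolding tr2 by simp
    finally show ?thesis using i v e by (simp add: w_def e_def)
  qed
  show ?thesis by (rule exI[of _ R], insert R adjR RR col, auto simp: unitary_def)
qed

lemma diagm_dims[simp]: "dim_row (diagm n d) = n" "dim_col (diagm n d) = n" by (auto simp: diagm_def)

lemma assoc3: "A \<in> carrier_mat n n \<Longrightarrow> B \<in> carrier_mat n n \<Longrightarrow> C \<in> carrier_mat n n \<Longrightarrow> A * B * C = A * (B * C)"
  by (rule assoc_mult_mat)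

lemma spectral: "hermitian N A \<Longrightarrow> \<exists>U d. unitary N U \<and> A = U * diagm N d * adj U"
proof (induction N arbitrary: A)
  case 0
  have A: "A \<in> carrier_mat 0 0" using 0 unfolding hermitian_def by blast
  show ?case
    by (rule exI[of _ "1\<^sub>m 0"], rule exI[of _ "\<lambda>_. 0"], insert A, auto simp: unitary_def intro!: eq_matI)
next
  case (Suc m A)
  define N where "N = Suc m"
  have h: "hermitian N A" using Suc.prems N_def by simp
  have A: "A \<in> carrier_mat N N" using h unfolding hermitian_def by blast
  have N0: "0 < N" unfolding N_def by simp
  obtain as where cp: "char_poly A = (\<Prod>a\<leftarrow>as. [:- a, 1:])" and las: "length as = N"
    using char_poly_factorized[OF A] by blast
  then obtain e as' where as: "as = e # as'" unfolding N_def by (cases as, auto)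
  have "poly (char_poly A) e = 0" unfolding cp as by simp
  hence "eigenvalue A e" using eigenvalue_root_char_poly[OF A] by simp
  define v0 where "v0 = find_eigenvector A e"
  have ev: "eigenvector A v0 e" unfolding v0_def by (rule find_eigenvector[OF A], fact)
  hence v0: "v0 \<in> carrier_vec N" and v00: "v0 \<noteq> 0\<^sub>v N" and Av0: "A *\<^sub>v v0 = e \<cdot>\<^sub>v v0"
    unfolding eigenvector_def using A by auto
  have nv0: "vnorm v0 > 0" using vnorm_zero_iff[OF v0] v00 vnorm_nonneg[of v0] by linarith
  define c2 where "c2 = (vnorm v0)^2"
  have c2: "c2 > 0" unfolding c2_def using nv0 by simp
  have "(A *\<^sub>v v0) \<bullet>c v0 = e * (v0 \<bullet>c v0)" using Av0 v0 by (simp add: cprod_smult_left[OF v0 v0])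
  also have "v0 \<bullet>c v0 = of_real c2" unfolding c2_def using vnorm_sq[OF v0] cprod_self_real[OF v0] by simp
  finally have "e * of_real c2 = of_real (Re ((A *\<^sub>v v0) \<bullet>c v0))" using herm_rq_real[OF h v0] by simp
  hence "Im (e * of_real c2) = 0" by (metis Im_complex_of_real)
  hence "Im e * c2 = 0" by simp
  hence ime: "Im e = 0" using c2 by simp
  define lam where "lam = Re e"
  have e_real: "e = of_real lam" unfolding lam_def using ime by (simp add: complex_eq_iff)
  define c where "c = v0 $ 0"
  define g where "g = (if c = 0 then 1 else cnj c / of_real (cmod c))"
  define s where "s = g / of_real (vnorm v0)"
  define v1 where "v1 = s \<cdot>\<^sub>v v0"
  have cg: "cmod g = 1" unfolding g_def by (auto simp: norm_divide)
  have v1: "v1 \<in> carrier_vec N" unfolding v1_def using v0 by simp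
  have nv1: "vnorm v1 = 1" unfolding v1_def vnorm_smult[OF v0] s_def using nv0 cg
    by (simp add: norm_divide)
  have im1: "Im (v1 $ 0) = 0"
  proof (cases "c = 0")
    case True
    thus ?thesis unfolding v1_def using v0 N0 by (simp add: c_def)
  next
    case False
    have "v1 $ 0 = g * c / of_real (vnorm v0)" unfolding v1_def s_def using v0 N0 by (simp add: c_def)
    also have "g * c = of_real (cmod c)" unfolding g_def using False
      by (simp add: complex_norm_square[symmetric] power2_eq_square mult.commute)
    finally show ?thesis by simp
  qed
  have Av1: "A *\<^sub>v v1 = e \<cdot>\<^sub>v v1"
    unfolding v1_def mult_mat_vec[OF A v0] Av0 smult_smult_assoc by (simp add: mult.commute)
  obtain R where R: "unitary N R" and Rcol: "\<forall>i<N. R $$ (i,0) = v1 $ i"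
    using householder[OF v1 N0 nv1 im1] by blast
  have Rc: "R \<in> carrier_mat N N" and RR: "adj R * R = 1\<^sub>m N" and RR': "R * adj R = 1\<^sub>m N"
    using R unfolding unitary_def by auto
  have aRc: "adj R \<in> carrier_mat N N" using Rc by simp
  have colR: "col R 0 = v1" by (rule eq_vecI, insert Rc v1 Rcol N0, auto)
  define A' where "A' = adj R * A * R"
  have A'c: "A' \<in> carrier_mat N N" unfolding A'_def by (rule mult_carrier_mat[OF mult_carrier_mat[OF aRc A] Rc])
  have adjA: "adj A = A" by (rule hermitian_adj[OF h])
  have "adj A' = adj R * adj (adj R * A)" unfolding A'_def by (rule adj_mult[OF mult_carrier_mat[OF aRc A] Rc])
  also have "adj (adj R * A) = adj A * R" using adj_mult[OF aRc A] by simp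
  finally have "adj A' = A'" unfolding adjA A'_def using assoc3[OF aRc A Rc] by simp
  hence hA': "hermitian N A'" by (rule adj_hermitian[OF A'c])
  have col0: "A' $$ (i,0) = (if i = 0 then e else 0)" if i: "i < N" for i
  proof -
    have "col A' 0 = (adj R * A) *\<^sub>v col R 0" unfolding A'_def
      by (rule col_mult2[OF mult_carrier_mat[OF aRc A] Rc N0])
    also have "\<dots> = adj R *\<^sub>v (A *\<^sub>v v1)" unfolding colR using aRc A v1 by simp
    also have "\<dots> = e \<cdot>\<^sub>v (adj R *\<^sub>v col R 0)" unfolding Av1 colR by (rule mult_mat_vec[OF aRc v1])
    also have "adj R *\<^sub>v col R 0 = col (adj R * R) 0" by (rule col_mult2[OF aRc Rc N0, symmetric])
    also have "\<dots> = unit_vec N 0" unfolding RR using N0 by simp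
    finally have "col A' 0 = e \<cdot>\<^sub>v unit_vec N 0" .
    hence "col A' 0 $ i = (e \<cdot>\<^sub>v unit_vec N 0) $ i" by simp
    thus ?thesis using i A'c N0 by auto
  qed
  have hA'e: "\<And>i j. i < N \<Longrightarrow> j < N \<Longrightarrow> A' $$ (i,j) = cnj (A' $$ (j,i))"
    using hA' unfolding hermitian_def by blast
  have row0: "A' $$ (0,j) = (if j = 0 then e else 0)" if j: "j < N" for j
  proof -
    have "A' $$ (0,j) = cnj (A' $$ (j,0))" using hA'e[OF N0 j] .
    also have "\<dots> = (if j = 0 then e else 0)" unfolding col0[OF j] using e_real by simp
    finally show ?thesis .
  qed
  define A3 where "A3 = mat m m (\<lambda>(i,j). A' $$ (Suc i, Suc j))"
  have A3c: "A3 \<in> carrier_mat m m" unfolding A3_def by simp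
  have hA3: "hermitian m A3" unfolding hermitian_def
  proof (intro conjI allI impI A3c)
    fix i j assume ij: "i < m" "j < m"
    hence "A' $$ (Suc i, Suc j) = cnj (A' $$ (Suc j, Suc i))" using hA'e[of "Suc i" "Suc j"] N_def by simp
    thus "A3 $$ (i,j) = cnj (A3 $$ (j,i))" unfolding A3_def using ij by simp
  qed
  obtain U3 d3 where U3: "unitary m U3" and A3d: "A3 = U3 * diagm m d3 * adj U3"
    using Suc.IH[OF hA3] by blast
  have U3c: "U3 \<in> carrier_mat m m" and UU3: "adj U3 * U3 = 1\<^sub>m m" and UU3': "U3 * adj U3 = 1\<^sub>m m"
    using U3 unfolding unitary_def by auto
  have aU3c: "adj U3 \<in> carrier_mat m m" using U3c by simp
  have A'ext: "A' = ext e A3"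
  proof (rule eq_matI)
    fix i j assume "i < dim_row (ext e A3)" "j < dim_col (ext e A3)"
    hence ij: "i < N" "j < N" using A3c N_def by (auto simp: ext_def)
    show "A' $$ (i,j) = ext e A3 $$ (i,j)"
    proof (cases "i = 0")
      case True thus ?thesis using row0[OF ij(2)] ij N_def by (simp add: ext_index[OF A3c])
    next
      case False
      show ?thesis
      proof (cases "j = 0")
        case True thus ?thesis using col0[OF ij(1)] ij N_def by (simp add: ext_index[OF A3c])
      next
        case False
        have "ext e A3 $$ (i,j) = A3 $$ (i - 1, j - 1)" using \<open>i \<noteq> 0\<close> False ij N_def by (simp add: ext_index[OF A3c])
        also have "\<dots> = A' $$ (i,j)" using \<open>i \<noteq> 0\<close> False ij N_def by (simp add: A3_def)
        finally show ?thesis by simp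
      qed
    qed
  qed (insert A'c A3c N_def, auto simp: ext_def)
  define E where "E = ext 1 U3"
  have Ec: "E \<in> carrier_mat N N" unfolding E_def N_def using U3c by simp
  have aEc: "adj E \<in> carrier_mat N N" using Ec by simp
  have adjE: "adj E = ext 1 (adj U3)" unfolding E_def using adj_ext[OF U3c] by simp
  have EE: "adj E * E = 1\<^sub>m N" unfolding adjE unfolding E_def N_def
    using ext_mult[OF aU3c U3c, of 1 1] UU3 ext_one by simp
  have EE': "E * adj E = 1\<^sub>m N" unfolding adjE unfolding E_def N_def
    using ext_mult[OF U3c aU3c, of 1 1] UU3' ext_one by simp
  define U where "U = R * E"
  have Uc: "U \<in> carrier_mat N N" unfolding U_def using Rc Ec by simp
  have adjU: "adj (R * E) = adj E * adj R" by (rule adj_mult[OF Rc Ec])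
  note simpN = assoc_mult_mat[of _ N N _ N _ N] mult_carrier_mat[of _ N N _ N] Rc Ec aRc aEc A
  note simpm = assoc_mult_mat[of _ m m _ m _ m] mult_carrier_mat[of _ m m _ m] U3c aU3c diagm_carrier
  have UU: "adj U * U = 1\<^sub>m N"
  proof -
    have "adj U * U = adj E * (adj R * R) * E" unfolding U_def adjU by (simp add: simpN)
    thus ?thesis unfolding RR using EE Ec by simp
  qed
  have UU': "U * adj U = 1\<^sub>m N"
  proof -
    have "U * adj U = R * (E * adj E) * adj R" unfolding U_def adjU by (simp add: simpN)
    thus ?thesis unfolding EE' using RR' Rc by simp
  qed
  have D3: "adj U3 * A3 * U3 = diagm m d3"
  proof -
    have "adj U3 * A3 * U3 = (adj U3 * U3) * diagm m d3 * (adj U3 * U3)" unfolding A3d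
      by (simp add: simpm)
    thus ?thesis unfolding UU3 by simp
  qed
  define d where "d i = (if i = 0 then lam else d3 (i - 1))" for i
  have DU: "adj U * A * U = diagm N d"
  proof -
    have "adj U * A * U = adj E * A' * E" unfolding U_def adjU A'_def by (simp add: simpN)
    also have "\<dots> = ext 1 (adj U3) * ext e A3 * ext 1 U3" unfolding A'ext adjE by (simp add: E_def)
    also have "\<dots> = ext e (adj U3 * A3 * U3)"
      using ext_mult[OF aU3c A3c, of 1 e] ext_mult[OF mult_carrier_mat[OF aU3c A3c] U3c, of e 1] by simp
    also have "\<dots> = diagm N d" unfolding D3 e_real d_def N_def by (rule ext_diag)
    finally show ?thesis .
  qed
  have Uc': "adj U \<in> carrier_mat N N" using Uc by simp
  have "A = (U * adj U) * A * (U * adj U)" unfolding UU' using A by simp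
  also have "\<dots> = U * (adj U * A * U) * adj U"
    using Uc Uc' A by (simp add: assoc_mult_mat[of _ N N _ N _ N] mult_carrier_mat[of _ N N _ N])
  finally have "A = U * diagm N d * adj U" unfolding DU .
  moreover have "unitary N U" unfolding unitary_def using Uc UU UU' by simp
  ultimately show ?case unfolding N_def by blast
qed

lemma linear_nonzero: "[:- a, 1:] \<noteq> (0 :: complex poly)" by simp

lemma prod_linear_nonzero: "(\<Prod>a\<leftarrow>as. [:- a, 1:]) \<noteq> (0 :: complex poly)"
proof (induction as)
  case (Cons a as)
  have "[:- a, 1:] * (\<Prod>a\<leftarrow>as. [:- a, 1:]) \<noteq> (0 :: complex poly)"
    by (rule no_zero_divisors[OF linear_nonzero Cons.IH])
  thus ?case by simp
qed simp

lemma order_prod_linear: "order x (\<Prod>a\<leftarrow>as. [:- a, 1:]) = count_list as (x :: complex)"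
proof (induction as)
  case Nil
  show ?case by (simp add: order_0I)
next
  case (Cons a as)
  have "order x (\<Prod>a\<leftarrow>a # as. [:- a, 1:]) = order x ([:- a, 1:] * (\<Prod>a\<leftarrow>as. [:- a, 1:]))" by simp
  also have "\<dots> = order x [:- a, 1:] + order x (\<Prod>a\<leftarrow>as. [:- a, 1:])"
    by (rule order_mult, rule no_zero_divisors[OF linear_nonzero prod_linear_nonzero])
  also have "order x [:- a, 1:] = (if a = x then 1 else 0)"
  proof (cases "a = x")
    case True thus ?thesis using order_power_n_n[of a 1] by simp
  next
    case False thus ?thesis by (simp add: order_0I)
  qed
  finally show ?case using Cons by simp
qed

lemma poly_prod_linear: "poly (\<Prod>a\<leftarrow>as. [:- a, 1:]) x = 0 \<longleftrightarrow> (x :: complex) \<in> set as"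
  by (induction as, auto)

lemma sum_count_list: "finite S \<Longrightarrow> (\<Sum>e\<in>S. count_list as e) = length (filter (\<lambda>a. a \<in> S) as)"
proof (induction as)
  case Nil thus ?case by simp
next
  case (Cons a as)
  have "(\<Sum>e\<in>S. count_list (a # as) e) = (\<Sum>e\<in>S. count_list as e + (if a = e then 1 else 0))"
    by (rule sum.cong, auto)
  also have "\<dots> = (\<Sum>e\<in>S. count_list as e) + (\<Sum>e\<in>S. (if a = e then 1 else 0))" by (rule sum.distrib)
  also have "(\<Sum>e\<in>S. (if a = e then 1 else 0)) = (if a \<in> S then 1 else (0::nat))"
    using Cons.prems by (simp add: sum.delta')
  finally show ?case using Cons by simp
qed

lemma eig_count_formula: assumes cp: "char_poly H = (\<Prod>a\<leftarrow>map (\<lambda>i. complex_of_real (d i)) [0..<N]. [:- a, 1:])"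
  shows "eig_count H x = card {i. i < N \<and> d i \<le> x}"
proof -
  define as where "as = map (\<lambda>i. complex_of_real (d i)) [0..<N]"
  define S where "S = {e. poly (char_poly H) e = 0 \<and> Re e \<le> x}"
  have S: "S = {e \<in> set as. Re e \<le> x}" unfolding S_def cp as_def[symmetric] poly_prod_linear by auto
  have fS: "finite S" unfolding S by simp
  have "eig_count H x = (\<Sum>e\<in>S. count_list as e)"
    unfolding eig_count_def S_def[symmetric] unfolding cp as_def[symmetric] order_prod_linear ..
  also have "\<dots> = length (filter (\<lambda>a. a \<in> S) as)" by (rule sum_count_list[OF fS])
  also have "filter (\<lambda>a. a \<in> S) as = filter (\<lambda>a. Re a \<le> x) as" unfolding S by (rule filter_cong, auto)
  also have "length \<dots> = length (filter (\<lambda>i. d i \<le> x) [0..<N])" unfolding as_def filter_map by (simp add: o_def)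
  also have "\<dots> = card {i. i < N \<and> d i \<le> x}" unfolding length_filter_conv_card
    by (intro arg_cong[where f=card] Collect_cong, auto)
  finally show ?thesis .
qed

lemma lam_facts: fixes i0 N :: nat assumes ec: "\<And>x. eig_count H x = card {i. i < N \<and> d i \<le> x}"
  and i0: "i0 < N" and min: "\<And>i. i < N \<Longrightarrow> d i0 \<le> d i"
  shows "lam H 0 = d i0" "\<And>j. j < N \<Longrightarrow> j \<noteq> i0 \<Longrightarrow> lam H 1 \<le> d j" "2 \<le> N \<Longrightarrow> lam H 0 \<le> lam H 1"
proof -
  have fin: "finite {i. i < N \<and> d i \<le> x}" for x by (rule finite_subset[of _ "{..<N}"], auto)
  have pos: "0 < eig_count H x \<longleftrightarrow> d i0 \<le> x" for x
  proof
    assume "0 < eig_count H x"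
    hence "{i. i < N \<and> d i \<le> x} \<noteq> {}" unfolding ec by (metis card.empty less_irrefl)
    then obtain i where "i < N" "d i \<le> x" by auto
    thus "d i0 \<le> x" using min by force
  next
    assume "d i0 \<le> x"
    hence "i0 \<in> {i. i < N \<and> d i \<le> x}" using i0 by auto
    hence "{i. i < N \<and> d i \<le> x} \<noteq> {}" by auto
    thus "0 < eig_count H x" unfolding ec using fin by (simp add: card_gt_0_iff)
  qed
  have set0: "{x. 0 < eig_count H x} = {d i0..}" using pos by auto
  show l0: "lam H 0 = d i0" unfolding lam_def set0 by simp
  have lo: "d i0 \<le> x" if "x \<in> {x. 1 < eig_count H x}" for x
  proof -
    have "0 < eig_count H x" using that by simp
    thus ?thesis using pos by blast
  qed
  have bdd: "bdd_below {x. 1 < eig_count H x}"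
    by (rule bdd_belowI[of _ "d i0"], rule lo)
  have mem: "d j \<in> {x. 1 < eig_count H x}" if j: "j < N" "j \<noteq> i0" for j
  proof -
    have "{i0, j} \<subseteq> {i. i < N \<and> d i \<le> d j}" using i0 j min by auto
    hence "card {i0, j} \<le> card {i. i < N \<and> d i \<le> d j}" by (rule card_mono[OF fin])
    thus ?thesis unfolding ec using j by simp
  qed
  show "\<And>j. j < N \<Longrightarrow> j \<noteq> i0 \<Longrightarrow> lam H 1 \<le> d j"
    unfolding lam_def by (rule cInf_lower[OF mem bdd])
  assume N2: "2 \<le> N"
  define j :: nat where "j = (if i0 = 0 then 1 else 0)"
  have j: "j < N" "j \<noteq> i0" unfolding j_def using N2 by auto
  have "d i0 \<le> lam H 1" unfolding lam_def
    by (rule cInf_greatest, insert mem[OF j], blast, rule lo)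
  thus "lam H 0 \<le> lam H 1" using l0 by simp
qed

lemma diagm_ut: "upper_triangular (diagm N d)" unfolding upper_triangular_def diagm_def by auto

lemma diag_mat_diagm: "diag_mat (diagm N d) = map (\<lambda>i. complex_of_real (d i)) [0..<N]"
  unfolding diag_mat_def diagm_def by auto

lemma diagm_mult_vec: assumes y: "y \<in> carrier_vec N" and i: "i < N"
  shows "(diagm N d *\<^sub>v y) $ i = of_real (d i) * y $ i"
proof -
  have "(diagm N d *\<^sub>v y) $ i = (\<Sum>l<N. diagm N d $$ (i,l) * y $ l)"
    by (rule mult_vec_index_sum[OF diagm_carrier y i])
  also have "\<dots> = (\<Sum>l<N. (if i = l then 1 else 0) * (of_real (d i) * y $ l))"
    by (rule sum.cong, insert i, auto simp: diagm_def)
  also have "\<dots> = of_real (d i) * y $ i" by (rule sum_delta_left[OF i])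
  finally show ?thesis .
qed

lemma herm_facts: assumes h: "hermitian N H" and N: "0 < N"
  shows "\<exists>g. g \<in> carrier_vec N \<and> vnorm g = 1 \<and> Re ((H *\<^sub>v g) \<bullet>c g) = lam H 0 \<and>
     (\<forall>x\<in>carrier_vec N. lam H 0 * (vnorm x)^2 \<le> Re ((H *\<^sub>v x) \<bullet>c x)) \<and>
     (\<forall>z\<in>carrier_vec N. z \<bullet>c g = 0 \<longrightarrow> lam H 1 * (vnorm z)^2 \<le> Re ((H *\<^sub>v z) \<bullet>c z)) \<and>
     (2 \<le> N \<longrightarrow> lam H 0 \<le> lam H 1)"
proof -
  obtain U d where U: "unitary N U" and Hd: "H = U * diagm N d * adj U" using spectral[OF h] by blast
  have Uc: "U \<in> carrier_mat N N" and UU: "adj U * U = 1\<^sub>m N" and UU': "U * adj U = 1\<^sub>m N"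
    using U unfolding unitary_def by auto
  have aUc: "adj U \<in> carrier_mat N N" using Uc by simp
  have Hc: "H \<in> carrier_mat N N" using h unfolding hermitian_def by blast
  have "similar_mat_wit H (diagm N d) U (adj U)"
    by (rule similar_mat_witI[OF UU' UU Hd Hc diagm_carrier Uc aUc])
  hence "similar_mat H (diagm N d)" unfolding similar_mat_def by blast
  hence "char_poly H = char_poly (diagm N d)" by (rule char_poly_similar)
  also have "\<dots> = (\<Prod>a\<leftarrow>map (\<lambda>i. complex_of_real (d i)) [0..<N]. [:- a, 1:])"
    using char_poly_upper_triangular[OF diagm_carrier diagm_ut] diag_mat_diagm by metis
  finally have ec: "eig_count H x = card {i. i < N \<and> d i \<le> x}" for x by (rule eig_count_formula)
  obtain i0 where i0: "i0 < N" and min: "\<And>i. i < N \<Longrightarrow> d i0 \<le> d i"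
  proof -
    have "Min (d ` {..<N}) \<in> d ` {..<N}" by (rule Min_in, insert N, auto)
    then obtain i0 where "i0 < N" "d i0 = Min (d ` {..<N})" by auto
    thus ?thesis using that by auto
  qed
  note lf = lam_facts[OF ec i0 min]
  have ray: "(H *\<^sub>v x) \<bullet>c x = of_real (\<Sum>i<N. d i * (cmod ((adj U *\<^sub>v x) $ i))^2)"
    and nrm: "(vnorm x)^2 = (\<Sum>i<N. (cmod ((adj U *\<^sub>v x) $ i))^2)"
    if x: "x \<in> carrier_vec N" for x
  proof -
    define y where "y = adj U *\<^sub>v x"
    have y: "y \<in> carrier_vec N" unfolding y_def using aUc x by simp
    have Dy: "diagm N d *\<^sub>v y \<in> carrier_vec N" by (rule mult_mat_vec_carrier[OF diagm_carrier y])
    have UDc: "U * diagm N d \<in> carrier_mat N N" by (rule mult_carrier_mat[OF Uc diagm_carrier])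
    have "H *\<^sub>v x = (U * diagm N d) *\<^sub>v y" unfolding Hd y_def by (rule assoc_mult_mat_vec[OF UDc aUc x])
    also have "\<dots> = U *\<^sub>v (diagm N d *\<^sub>v y)" by (rule assoc_mult_mat_vec[OF Uc diagm_carrier y])
    finally have "(H *\<^sub>v x) \<bullet>c x = (U *\<^sub>v (diagm N d *\<^sub>v y)) \<bullet>c x" by simp
    also have "\<dots> = (diagm N d *\<^sub>v y) \<bullet>c (adj U *\<^sub>v x)" by (rule cprod_mult[OF Uc Dy x])
    also have "adj U *\<^sub>v x = y" unfolding y_def ..
    also have "(diagm N d *\<^sub>v y) \<bullet>c y = (\<Sum>i<N. (diagm N d *\<^sub>v y) $ i * cnj (y $ i))" by (rule cprod_sum[OF y])
    also have "\<dots> = (\<Sum>i<N. of_real (d i * (cmod (y $ i))^2))"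
    proof (rule sum.cong)
      fix i assume "i \<in> {..<N}"
      hence i: "i < N" by simp
      have "(diagm N d *\<^sub>v y) $ i * cnj (y $ i) = of_real (d i) * (y $ i * cnj (y $ i))"
        unfolding diagm_mult_vec[OF y i] by simp
      also have "y $ i * cnj (y $ i) = of_real ((cmod (y $ i))^2)" by (rule complex_norm_square[symmetric])
      finally show "(diagm N d *\<^sub>v y) $ i * cnj (y $ i) = of_real (d i * (cmod (y $ i))^2)" by simp
    qed simp
    finally show "(H *\<^sub>v x) \<bullet>c x = of_real (\<Sum>i<N. d i * (cmod ((adj U *\<^sub>v x) $ i))^2)"
      unfolding y_def by simp
    have "y \<bullet>c y = x \<bullet>c (adj (adj U) *\<^sub>v y)" using cprod_mult[OF aUc x y] by (simp add: y_def)
    also have "adj (adj U) *\<^sub>v y = x" unfolding y_def adj_adj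
      using Uc aUc x UU' by (simp add: assoc_mult_mat_vec[of _ N N _ N, symmetric])
    finally have "y \<bullet>c y = x \<bullet>c x" .
    thus "(vnorm x)^2 = (\<Sum>i<N. (cmod ((adj U *\<^sub>v x) $ i))^2)"
      unfolding vnorm_sq[OF x] using vnorm_sum_sq[OF y] vnorm_sq[OF y] y_def by simp
  qed
  have coord: "(adj U *\<^sub>v z) $ i = z \<bullet>c col U i" if z: "z \<in> carrier_vec N" and i: "i < N" for z i
  proof -
    have "(adj U *\<^sub>v z) $ i = (\<Sum>l<N. adj U $$ (i,l) * z $ l)" by (rule mult_vec_index_sum[OF aUc z i])
    also have "\<dots> = (\<Sum>l<N. z $ l * cnj (col U i $ l))" by (rule sum.cong, insert Uc i, auto)
    also have "\<dots> = z \<bullet>c col U i" by (rule cprod_sum[symmetric], insert Uc, auto)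
    finally show ?thesis .
  qed
  define g where "g = col U i0"
  have g: "g \<in> carrier_vec N" unfolding g_def by (rule carrier_vecI, insert Uc, simp)
  have yg: "adj U *\<^sub>v g = unit_vec N i0" unfolding g_def
    using col_mult2[OF aUc Uc i0, symmetric] UU i0 by simp
  have ng: "vnorm g = 1"
  proof -
    have "(vnorm g)^2 = (\<Sum>i<N. (cmod (unit_vec N i0 $ i))^2)" using nrm[OF g] yg by simp
    also have "\<dots> = (\<Sum>i<N. if i = i0 then 1 else 0)" by (rule sum.cong, insert i0, auto)
    also have "\<dots> = 1" using i0 by (subst sum.delta, auto)
    finally show ?thesis using vnorm_nonneg[of g] by (simp add: power2_eq_1_iff)
  qed
  have rg: "Re ((H *\<^sub>v g) \<bullet>c g) = lam H 0"
  proof -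
    have "Re ((H *\<^sub>v g) \<bullet>c g) = (\<Sum>i<N. d i * (cmod (unit_vec N i0 $ i))^2)" using ray[OF g] yg by simp
    also have "\<dots> = (\<Sum>i<N. if i = i0 then d i else 0)" by (rule sum.cong, insert i0, auto)
    also have "\<dots> = d i0" using i0 by (subst sum.delta, auto)
    finally show ?thesis using lf(1) by simp
  qed
  have lb: "lam H 0 * (vnorm x)^2 \<le> Re ((H *\<^sub>v x) \<bullet>c x)" if x: "x \<in> carrier_vec N" for x
  proof -
    have "lam H 0 * (vnorm x)^2 = (\<Sum>i<N. d i0 * (cmod ((adj U *\<^sub>v x) $ i))^2)"
      unfolding nrm[OF x] by (simp add: sum_distrib_left lf(1))
    also have "\<dots> \<le> (\<Sum>i<N. d i * (cmod ((adj U *\<^sub>v x) $ i))^2)"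
      by (rule sum_mono, rule mult_right_mono, insert min, auto)
    finally show ?thesis using ray[OF x] by simp
  qed
  have lb1: "lam H 1 * (vnorm z)^2 \<le> Re ((H *\<^sub>v z) \<bullet>c z)" if z: "z \<in> carrier_vec N" and zg: "z \<bullet>c g = 0" for z
  proof -
    have y0: "(adj U *\<^sub>v z) $ i0 = 0" using coord[OF z i0] zg g_def by simp
    have "lam H 1 * (vnorm z)^2 = (\<Sum>i<N. lam H 1 * (cmod ((adj U *\<^sub>v z) $ i))^2)"
      unfolding nrm[OF z] by (simp add: sum_distrib_left)
    also have "\<dots> \<le> (\<Sum>i<N. d i * (cmod ((adj U *\<^sub>v z) $ i))^2)"
    proof (rule sum_mono)
      fix i assume i: "i \<in> {..<N}"
      show "lam H 1 * (cmod ((adj U *\<^sub>v z) $ i))^2 \<le> d i * (cmod ((adj U *\<^sub>v z) $ i))^2"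
      proof (cases "i = i0")
        case True thus ?thesis using y0 by simp
      next
        case False thus ?thesis using lf(2)[of i] i by (intro mult_right_mono, auto)
      qed
    qed
    finally show ?thesis using ray[OF z] by simp
  qed
  show ?thesis using g ng rg lb lb1 lf(3) by blast
qed

definition subsp :: "nat \<Rightarrow> complex vec set \<Rightarrow> bool" where
  "subsp N V \<longleftrightarrow> V \<subseteq> carrier_vec N \<and> 0\<^sub>v N \<in> V \<and> (\<forall>x\<in>V. \<forall>y\<in>V. x + y \<in> V) \<and> (\<forall>a. \<forall>x\<in>V. a \<cdot>\<^sub>v x \<in> V)"

lemma smult_zero_vec'[simp]: "(a::complex) \<cdot>\<^sub>v 0\<^sub>v N = 0\<^sub>v N" by (intro eq_vecI, auto)

lemma mult_zero_vec'[simp]: "H \<in> carrier_mat N N \<Longrightarrow> (H::complex mat) *\<^sub>v 0\<^sub>v N = 0\<^sub>v N"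
  by (intro eq_vecI, auto simp: scalar_prod_def)

lemma lincomb_Nil[simp]: "lincomb N [] ws = 0\<^sub>v N" "lincomb N cs [] = 0\<^sub>v N"
  by (auto simp: lincomb_def)

lemma lincomb_Cons[simp]: "lincomb N (c # cs) (w # ws) = c \<cdot>\<^sub>v w + lincomb N cs ws"
  by (simp add: lincomb_def)

lemma lincomb_carrier: "set ws \<subseteq> carrier_vec N \<Longrightarrow> lincomb N cs ws \<in> carrier_vec N"
proof (induction ws arbitrary: cs)
  case (Cons w ws cs)
  thus ?case by (cases cs, auto)
qed simp

lemma lincomb_in: assumes V: "subsp N V" shows "set ws \<subseteq> V \<Longrightarrow> lincomb N cs ws \<in> V"
proof (induction ws arbitrary: cs)
  case Nil thus ?case using V unfolding subsp_def by simp
next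
  case (Cons w ws cs)
  show ?case
  proof (cases cs)
    case Nil thus ?thesis using V unfolding subsp_def by simp
  next
    case (Cons c cs')
    have "c \<cdot>\<^sub>v w \<in> V" "lincomb N cs' ws \<in> V" using V Cons.prems Cons.IH unfolding subsp_def by auto
    thus ?thesis using V Cons unfolding subsp_def by simp
  qed
qed

lemma lincomb_add: assumes "set ws1 \<subseteq> carrier_vec N" "set ws2 \<subseteq> carrier_vec N" "length cs1 = length ws1"
  shows "lincomb N cs1 ws1 + lincomb N cs2 ws2 = lincomb N (cs1 @ cs2) (ws1 @ ws2)"
  using assms
proof (induction ws1 arbitrary: cs1)
  case Nil thus ?case using lincomb_carrier[OF Nil(2)] by simp
next
  case (Cons w ws cs1)
  then obtain c cs where cs1: "cs1 = c # cs" by (cases cs1, auto)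
  have w: "w \<in> carrier_vec N" and ws: "set ws \<subseteq> carrier_vec N" using Cons by auto
  have "lincomb N cs1 (w # ws) + lincomb N cs2 ws2 = c \<cdot>\<^sub>v w + (lincomb N cs ws + lincomb N cs2 ws2)"
    unfolding cs1 using w lincomb_carrier[OF ws] lincomb_carrier[OF Cons(3)] by simp
  also have "lincomb N cs ws + lincomb N cs2 ws2 = lincomb N (cs @ cs2) (ws @ ws2)"
    using Cons cs1 ws by simp
  finally show ?case unfolding cs1 by simp
qed

lemma lincomb_smult: "set ws \<subseteq> carrier_vec N \<Longrightarrow> a \<cdot>\<^sub>v lincomb N cs ws = lincomb N (map ((*) a) cs) ws"
proof (induction ws arbitrary: cs)
  case Nil thus ?case by simp
next
  case (Cons w ws cs)
  show ?case
  proof (cases cs)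
    case Nil thus ?thesis by simp
  next
    case (Cons c cs')
    have w: "w \<in> carrier_vec N" and ws: "set ws \<subseteq> carrier_vec N" using Cons.prems by auto
    have "a \<cdot>\<^sub>v lincomb N cs (w # ws) = a \<cdot>\<^sub>v (c \<cdot>\<^sub>v w) + a \<cdot>\<^sub>v lincomb N cs' ws"
      unfolding Cons by (simp, rule smult_add_distrib_vec[OF _ lincomb_carrier[OF ws]], insert w, simp)
    thus ?thesis using Cons.IH[OF ws] Cons by (simp add: smult_smult_assoc)
  qed
qed

lemma cspan_subsp: assumes S: "S \<subseteq> carrier_vec N" shows "subsp N (cspan N S)"
  unfolding subsp_def
proof (intro conjI ballI allI)
  show "cspan N S \<subseteq> carrier_vec N" unfolding cspan_def using lincomb_carrier S by blast
  show "0\<^sub>v N \<in> cspan N S" unfolding cspan_def by (rule CollectI, rule exI[of _ "[]"], rule exI[of _ "[]"], simp)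
next
  fix x y assume "x \<in> cspan N S" "y \<in> cspan N S"
  then obtain cs1 ws1 cs2 ws2 where x: "x = lincomb N cs1 ws1" "set ws1 \<subseteq> S" "length cs1 = length ws1"
    and y: "y = lincomb N cs2 ws2" "set ws2 \<subseteq> S" "length cs2 = length ws2" unfolding cspan_def by blast
  have "x + y = lincomb N (cs1 @ cs2) (ws1 @ ws2)" unfolding x y
    by (rule lincomb_add, insert S x y, auto)
  thus "x + y \<in> cspan N S" unfolding cspan_def using x y
    by (intro CollectI exI[of _ "cs1 @ cs2"] exI[of _ "ws1 @ ws2"], auto)
next
  fix a x assume "x \<in> cspan N S"
  then obtain cs ws where x: "x = lincomb N cs ws" "set ws \<subseteq> S" "length cs = length ws" unfolding cspan_def by blast
  have "a \<cdot>\<^sub>v x = lincomb N (map ((*) a) cs) ws" unfolding x by (rule lincomb_smult, insert S x, auto)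
  thus "a \<cdot>\<^sub>v x \<in> cspan N S" unfolding cspan_def using x
    by (intro CollectI exI[of _ "map ((*) a) cs"] exI[of _ ws], auto)
qed

lemma in_cspan: "w \<in> S \<Longrightarrow> w \<in> carrier_vec N \<Longrightarrow> w \<in> cspan N S"
  unfolding cspan_def by (rule CollectI, rule exI[of _ "[1]"], rule exI[of _ "[w]"], auto)

lemma cspan_invariant: assumes S: "S \<subseteq> carrier_vec N" and H: "H \<in> carrier_mat N N"
  and ev: "\<forall>v\<in>S. \<exists>e. eigenvector H v e" and x: "x \<in> cspan N S"
  shows "H *\<^sub>v x \<in> cspan N S"
proof -
  have V: "subsp N (cspan N S)" by (rule cspan_subsp[OF S])
  obtain cs ws where x: "x = lincomb N cs ws" and ws: "set ws \<subseteq> S" using x unfolding cspan_def by blast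
  show ?thesis unfolding x using ws
  proof (induction ws arbitrary: cs)
    case Nil thus ?case using H V unfolding subsp_def by simp
  next
    case (Cons w ws cs)
    show ?case
    proof (cases cs)
      case Nil thus ?thesis using H V unfolding subsp_def by simp
    next
      case (Cons c cs')
      have wS: "w \<in> S" and ws: "set ws \<subseteq> S" using Cons.prems by auto
      have w: "w \<in> carrier_vec N" using wS S by auto
      have wsc: "set ws \<subseteq> carrier_vec N" using ws S by auto
      obtain e where "eigenvector H w e" using ev wS by auto
      hence Hw: "H *\<^sub>v w = e \<cdot>\<^sub>v w" unfolding eigenvector_def by auto
      have "H *\<^sub>v lincomb N cs (w # ws) = H *\<^sub>v (c \<cdot>\<^sub>v w) + H *\<^sub>v lincomb N cs' ws"
        unfolding Cons by (simp, rule mult_add_distrib_mat_vec[OF H], insert w lincomb_carrier[OF wsc], auto)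
      also have "H *\<^sub>v (c \<cdot>\<^sub>v w) = (c * e) \<cdot>\<^sub>v w" unfolding mult_mat_vec[OF H w] Hw smult_smult_assoc ..
      finally have eq: "H *\<^sub>v lincomb N cs (w # ws) = (c * e) \<cdot>\<^sub>v w + H *\<^sub>v lincomb N cs' ws" .
      have "(c * e) \<cdot>\<^sub>v w \<in> cspan N S" using V in_cspan[OF wS w] unfolding subsp_def by blast
      moreover have "H *\<^sub>v lincomb N cs' ws \<in> cspan N S" by (rule Cons.IH[OF ws])
      ultimately show ?thesis unfolding eq using V unfolding subsp_def by blast
    qed
  qed
qed

definition orth :: "nat \<Rightarrow> complex vec list \<Rightarrow> bool" where
  "orth N us \<longleftrightarrow> set us \<subseteq> carrier_vec N \<and>
     (\<forall>i<length us. \<forall>j<length us. us ! i \<bullet>c us ! j = (if i = j then 1 else 0))"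

lemma sum_restrict_less: fixes f :: "nat \<Rightarrow> complex" assumes "N \<le> k"
  shows "(\<Sum>l<k. if l < N then f l else 0) = (\<Sum>l<N. f l)"
proof -
  have "(\<Sum>l<k. if l < N then f l else 0) = (\<Sum>l\<in>{l \<in> {..<k}. l < N}. f l)"
    by (rule sum.inter_filter[symmetric], simp)
  also have "{l \<in> {..<k}. l < N} = {..<N}" using assms by auto
  finally show ?thesis .
qed

lemma orth_length: assumes o: "orth N us" shows "length us \<le> N"
proof (rule ccontr)
  assume "\<not> length us \<le> N"
  define k where "k = length us"
  have kN: "N < k" using \<open>\<not> length us \<le> N\<close> unfolding k_def by simp
  have uc: "us ! i \<in> carrier_vec N" if "i < k" for i using o that unfolding orth_def k_def by auto
  have on: "us ! i \<bullet>c us ! j = (if i = j then 1 else 0)" if "i < k" "j < k" for i j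
    using o that unfolding orth_def k_def by blast
  define K where "K = mat k k (\<lambda>(i,j). if i < N then us ! j $ i else 0)"
  have Kc: "K \<in> carrier_mat k k" unfolding K_def by simp
  have "adj K * K = 1\<^sub>m k"
  proof (rule eq_matI)
    fix i j assume "i < dim_row (1\<^sub>m k)" "j < dim_col (1\<^sub>m k)"
    hence ij: "i < k" "j < k" by auto
    have "(adj K * K) $$ (i,j) = (\<Sum>l<k. adj K $$ (i,l) * K $$ (l,j))"
      by (rule mult_index_sum[OF adj_carrier[OF Kc] Kc ij])
    also have "\<dots> = (\<Sum>l<k. if l < N then us ! j $ l * cnj (us ! i $ l) else 0)"
      by (rule sum.cong, insert ij Kc, auto simp: K_def)
    also have "\<dots> = (\<Sum>l<N. us ! j $ l * cnj (us ! i $ l))" by (rule sum_restrict_less, insert kN, simp)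
    also have "\<dots> = us ! j \<bullet>c us ! i" by (rule cprod_sum[symmetric, OF uc[OF ij(1)]])
    also have "\<dots> = 1\<^sub>m k $$ (i,j)" using on[OF ij(2) ij(1)] ij by auto
    finally show "(adj K * K) $$ (i,j) = 1\<^sub>m k $$ (i,j)" .
  qed (insert Kc, auto)
  hence KK: "K * adj K = 1\<^sub>m k" by (rule mat_mult_left_right_inverse[OF adj_carrier[OF Kc] Kc])
  have k1: "k - 1 < k" "\<not> k - 1 < N" using kN by auto
  have "(K * adj K) $$ (k - 1, k - 1) = (\<Sum>l<k. K $$ (k - 1, l) * adj K $$ (l, k - 1))"
    by (rule mult_index_sum[OF Kc adj_carrier[OF Kc] k1(1) k1(1)])
  also have "\<dots> = 0" by (rule sum.neutral, insert k1 Kc, auto simp: K_def)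
  finally show False using KK k1 by simp
qed

lemma lc_cprod: "set us \<subseteq> carrier_vec N \<Longrightarrow> length cs = length us \<Longrightarrow> z \<in> carrier_vec N \<Longrightarrow>
  lincomb N cs us \<bullet>c z = (\<Sum>i<length us. cs ! i * (us ! i \<bullet>c z))"
proof (induction us arbitrary: cs)
  case Nil thus ?case by simp
next
  case (Cons u us cs)
  then obtain c cs' where cs: "cs = c # cs'" by (cases cs, auto)
  have u: "u \<in> carrier_vec N" and usc: "set us \<subseteq> carrier_vec N" using Cons.prems by auto
  have "lincomb N cs (u # us) \<bullet>c z = (c \<cdot>\<^sub>v u) \<bullet>c z + lincomb N cs' us \<bullet>c z"
    unfolding cs lincomb_Cons
    by (rule cprod_add_left[OF _ lincomb_carrier[OF usc] Cons.prems(3)], insert u, simp)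
  also have "(c \<cdot>\<^sub>v u) \<bullet>c z = c * (u \<bullet>c z)" by (rule cprod_smult_left[OF u Cons.prems(3)])
  also have "lincomb N cs' us \<bullet>c z = (\<Sum>i<length us. cs' ! i * (us ! i \<bullet>c z))"
    by (rule Cons.IH[OF usc _ Cons.prems(3)], insert Cons.prems cs, simp)
  finally show ?case unfolding cs by (simp add: sum.lessThan_Suc_shift del: sum.lessThan_Suc)
qed

lemma minus_as_add: "x \<in> carrier_vec N \<Longrightarrow> y \<in> carrier_vec N \<Longrightarrow> x - y = x + (-1 :: complex) \<cdot>\<^sub>v y"
  by (intro eq_vecI, auto)

lemma subsp_minus: "subsp N V \<Longrightarrow> x \<in> V \<Longrightarrow> y \<in> V \<Longrightarrow> x - y \<in> V"
  using minus_as_add[of x N y] unfolding subsp_def by (metis subsetD)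

lemma orth_append: assumes o: "orth N us" and w: "w \<in> carrier_vec N" and ww: "w \<bullet>c w = 1"
  and wu: "\<forall>j<length us. w \<bullet>c us ! j = 0"
  shows "orth N (us @ [w])"
  unfolding orth_def
proof (intro conjI allI impI)
  show "set (us @ [w]) \<subseteq> carrier_vec N" using o w unfolding orth_def by auto
  fix i j assume i: "i < length (us @ [w])" and j: "j < length (us @ [w])"
  have uc: "k < length us \<Longrightarrow> us ! k \<in> carrier_vec N" for k using o unfolding orth_def by auto
  show "(us @ [w]) ! i \<bullet>c (us @ [w]) ! j = (if i = j then 1 else 0)"
  proof (cases "i < length us")
    case True
    show ?thesis
    proof (cases "j < length us")
      case True
      thus ?thesis using \<open>i < length us\<close> o unfolding orth_def by (simp add: nth_append)
    next
      case False
      hence "j = length us" using j by simp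
      moreover have "us ! i \<bullet>c w = 0" using cprod_cnj[OF uc[OF True] w] wu True by simp
      ultimately show ?thesis using True by (simp add: nth_append)
    qed
  next
    case False
    hence i': "i = length us" using i by simp
    show ?thesis
    proof (cases "j < length us")
      case True thus ?thesis using wu i' by (simp add: nth_append)
    next
      case False
      hence "j = length us" using j by simp
      thus ?thesis using i' ww by (simp add: nth_append)
    qed
  qed
qed

lemma proj_exists: assumes V: "subsp N V"
  shows "\<exists>P. \<forall>y\<in>carrier_vec N. P y \<in> V \<and> y - P y \<in> ocomp N V"
proof -
  have Vc: "V \<subseteq> carrier_vec N" using V unfolding subsp_def by auto
  define L where "L = {length vs | vs. orth N vs \<and> set vs \<subseteq> V}"
  have "L \<subseteq> {..N}" unfolding L_def using orth_length by auto
  hence finL: "finite L" by (rule finite_subset, simp)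
  have "0 \<in> L" unfolding L_def by (rule CollectI, rule exI[of _ "[]"], simp add: orth_def)
  hence "Max L \<in> L" using finL by (intro Max_in, auto)
  then obtain us where o: "orth N us" and usV: "set us \<subseteq> V" and lm: "length us = Max L"
    unfolding L_def by auto
  have maxi: "\<And>vs. orth N vs \<Longrightarrow> set vs \<subseteq> V \<Longrightarrow> length vs \<le> length us"
    unfolding lm using finL unfolding L_def by (intro Max_ge, auto)
  have usc: "set us \<subseteq> carrier_vec N" using o unfolding orth_def by auto
  have on: "us ! i \<bullet>c us ! j = (if i = j then 1 else 0)" if "i < length us" "j < length us" for i j
    using o that unfolding orth_def by blast
  define P where "P y = lincomb N (map (\<lambda>u. y \<bullet>c u) us) us" for y
  have Pc: "P y \<in> carrier_vec N" for y unfolding P_def by (rule lincomb_carrier[OF usc])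
  have PV: "P y \<in> V" for y unfolding P_def by (rule lincomb_in[OF V usV])
  have coef: "P y \<bullet>c us ! j = y \<bullet>c us ! j" if y: "y \<in> carrier_vec N" and j: "j < length us" for y j
  proof -
    have ujc: "us ! j \<in> carrier_vec N" using usc j by auto
    have "P y \<bullet>c us ! j = (\<Sum>i<length us. map (\<lambda>u. y \<bullet>c u) us ! i * (us ! i \<bullet>c us ! j))"
      unfolding P_def by (rule lc_cprod[OF usc _ ujc], simp)
    also have "\<dots> = (\<Sum>i<length us. (y \<bullet>c us ! i) * (if i = j then 1 else 0))"
      by (rule sum.cong, insert on j, auto)
    also have "\<dots> = y \<bullet>c us ! j" by (rule sum_delta_right[OF j])
    finally show ?thesis .
  qed
  have perp: "(y - P y) \<bullet>c us ! j = 0" if y: "y \<in> carrier_vec N" and j: "j < length us" for y j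
  proof -
    have ujc: "us ! j \<in> carrier_vec N" using usc j by auto
    show ?thesis unfolding cprod_minus_left[OF y Pc ujc] coef[OF y j] by simp
  qed
  have fix_: "P x = x" if x: "x \<in> V" for x
  proof (rule ccontr)
    assume ne: "P x \<noteq> x"
    have xc: "x \<in> carrier_vec N" using x Vc by auto
    define r where "r = x - P x"
    have rc: "r \<in> carrier_vec N" unfolding r_def using xc Pc by simp
    have rV: "r \<in> V" unfolding r_def by (rule subsp_minus[OF V x PV])
    have r0: "r \<noteq> 0\<^sub>v N"
    proof
      assume "r = 0\<^sub>v N"
      hence r0': "x - P x = 0\<^sub>v N" unfolding r_def .
      have "x = P x"
      proof (rule eq_vecI)
        fix i assume "i < dim_vec (P x)"
        hence i: "i < N" using Pc[of x] by simp
        from arg_cong[OF r0', of "\<lambda>v. v $ i"] have "x $ i - P x $ i = 0" using xc Pc[of x] i by simp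
        thus "x $ i = P x $ i" by simp
      qed (insert xc Pc[of x], simp)
      thus False using ne by simp
    qed
    have nr: "vnorm r > 0" using vnorm_zero_iff[OF rc] r0 vnorm_nonneg[of r] by linarith
    define w where "w = (1 / of_real (vnorm r)) \<cdot>\<^sub>v r"
    have wc: "w \<in> carrier_vec N" unfolding w_def using rc by simp
    have wV: "w \<in> V" unfolding w_def using V rV unfolding subsp_def by blast
    have "vnorm w = 1" unfolding w_def vnorm_smult[OF rc] using nr by (simp add: norm_divide)
    hence ww: "w \<bullet>c w = 1" using cprod_self_real[OF wc] vnorm_sq[OF wc] by simp
    have wu: "\<forall>j<length us. w \<bullet>c us ! j = 0"
    proof (intro allI impI)
      fix j assume j: "j < length us"
      have "w \<bullet>c us ! j = (1 / of_real (vnorm r)) * (r \<bullet>c us ! j)" unfolding w_def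
        by (rule cprod_smult_left[OF rc], insert usc j, auto)
      also have "r \<bullet>c us ! j = 0" unfolding r_def by (rule perp[OF xc j])
      finally show "w \<bullet>c us ! j = 0" by simp
    qed
    have "orth N (us @ [w])" by (rule orth_append[OF o wc ww wu])
    from maxi[OF this] wV usV show False by simp
  qed
  have ocomp: "y - P y \<in> ocomp N V" if y: "y \<in> carrier_vec N" for y
    unfolding ocomp_def
  proof (intro CollectI conjI ballI)
    show yc: "y - P y \<in> carrier_vec N" using y Pc by simp
    fix x assume x: "x \<in> V"
    have xc: "x \<in> carrier_vec N" using x Vc by auto
    have "(y - P y) \<bullet>c x = (y - P y) \<bullet>c P x" using fix_[OF x] by simp
    also have "\<dots> = cnj (P x \<bullet>c (y - P y))" by (rule cprod_cnj[OF Pc yc])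
    also have "P x \<bullet>c (y - P y) = (\<Sum>i<length us. map (\<lambda>u. x \<bullet>c u) us ! i * (us ! i \<bullet>c (y - P y)))"
      unfolding P_def[of x] by (rule lc_cprod[OF usc _ yc], simp)
    also have "\<dots> = 0"
    proof (rule sum.neutral, intro ballI)
      fix i assume "i \<in> {..<length us}"
      hence i: "i < length us" by simp
      have uic: "us ! i \<in> carrier_vec N" using usc i by auto
      have "us ! i \<bullet>c (y - P y) = cnj ((y - P y) \<bullet>c us ! i)" by (rule cprod_cnj[OF yc uic])
      thus "map (\<lambda>u. x \<bullet>c u) us ! i * (us ! i \<bullet>c (y - P y)) = 0" using perp[OF y i] by simp
    qed
    finally show "(y - P y) \<bullet>c x = 0" by simp
  qed
  show ?thesis using PV ocomp by blast
qed

lemma ocomp_carrier: "ocomp N V \<subseteq> carrier_vec N" unfolding ocomp_def by auto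

lemma ocompD: "q \<in> ocomp N V \<Longrightarrow> x \<in> V \<Longrightarrow> q \<bullet>c x = 0" unfolding ocomp_def by auto

lemma ocompD2: assumes q: "q \<in> ocomp N V" and x: "x \<in> V" and V: "V \<subseteq> carrier_vec N" shows "x \<bullet>c q = 0"
proof -
  have qc: "q \<in> carrier_vec N" using q ocomp_carrier by auto
  have xc: "x \<in> carrier_vec N" using x V by auto
  have "x \<bullet>c q = cnj (q \<bullet>c x)" by (rule cprod_cnj[OF qc xc])
  thus ?thesis using ocompD[OF q x] by simp
qed

lemma ocomp_minus: assumes "a \<in> ocomp N V" "b \<in> ocomp N V" and V: "V \<subseteq> carrier_vec N"
  shows "a - b \<in> ocomp N V"
proof -
  have a: "a \<in> carrier_vec N" and b: "b \<in> carrier_vec N" using assms ocomp_carrier by auto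
  show ?thesis unfolding ocomp_def
  proof (intro CollectI conjI ballI)
    show "a - b \<in> carrier_vec N" using a b by simp
    fix x assume x: "x \<in> V"
    have xc: "x \<in> carrier_vec N" using x V by auto
    have "(a - b) \<bullet>c x = a \<bullet>c x - b \<bullet>c x" by (rule cprod_minus_left[OF a b xc])
    thus "(a - b) \<bullet>c x = 0" using ocompD[OF assms(1) x] ocompD[OF assms(2) x] by simp
  qed
qed

lemma proj_unique: assumes W: "W \<subseteq> carrier_vec N" and Wm: "\<And>a b. a \<in> W \<Longrightarrow> b \<in> W \<Longrightarrow> a - b \<in> W"
  and y: "y \<in> carrier_vec N" and w: "w \<in> W" and yw: "y - w \<in> ocomp N W"
  shows "proj N W y = w"
  unfolding proj_def
proof (rule the_equality)
  show "w \<in> W \<and> y - w \<in> ocomp N W" using w yw by simp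
  fix w' assume w': "w' \<in> W \<and> y - w' \<in> ocomp N W"
  have wc: "w \<in> carrier_vec N" and w'c: "w' \<in> carrier_vec N" using w w' W by auto
  define d where "d = w' - w"
  have dW: "d \<in> W" unfolding d_def using Wm w w' by simp
  have dc: "d \<in> carrier_vec N" using dW W by auto
  have eq: "d = (y - w) - (y - w')" unfolding d_def by (rule eq_vecI, insert y wc w'c, auto)
  have yw1: "y - w \<in> carrier_vec N" and yw2: "y - w' \<in> carrier_vec N" using y wc w'c by auto
  have "((y - w) - (y - w')) \<bullet>c d = (y - w) \<bullet>c d - (y - w') \<bullet>c d" by (rule cprod_minus_left[OF yw1 yw2 dc])
  hence "d \<bullet>c d = (y - w) \<bullet>c d - (y - w') \<bullet>c d" unfolding eq[symmetric] .
  also have "\<dots> = 0" using ocompD[OF yw dW] ocompD[OF conjunct2[OF w'] dW] by simp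
  finally have "d = 0\<^sub>v N" using conjugate_square_eq_0_vec[OF dc] by simp
  hence d0: "w' - w = 0\<^sub>v N" unfolding d_def .
  show "w' = w"
  proof (rule eq_vecI)
    fix i assume "i < dim_vec w"
    hence i: "i < N" using wc by simp
    from arg_cong[OF d0, of "\<lambda>v. v $ i"] have "w' $ i - w $ i = 0" using wc w'c i by simp
    thus "w' $ i = w $ i" by simp
  qed (insert wc w'c, simp)
qed

lemma projV: assumes V: "subsp N V" and y: "y \<in> carrier_vec N"
  shows "proj N V y \<in> V" "y - proj N V y \<in> ocomp N V"
proof -
  obtain P where P: "\<forall>y\<in>carrier_vec N. P y \<in> V \<and> y - P y \<in> ocomp N V" using proj_exists[OF V] by blast
  have Vc: "V \<subseteq> carrier_vec N" using V unfolding subsp_def by auto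
  have "proj N V y = P y" by (rule proj_unique[OF Vc subsp_minus[OF V] y], insert P y, auto)
  thus "proj N V y \<in> V" "y - proj N V y \<in> ocomp N V" using P y by auto
qed

lemma projW: assumes V: "subsp N V" and y: "y \<in> carrier_vec N"
  shows "proj N (ocomp N V) y = y - proj N V y"
proof -
  have Vc: "V \<subseteq> carrier_vec N" using V unfolding subsp_def by auto
  have p: "proj N V y \<in> V" and q: "y - proj N V y \<in> ocomp N V" using projV[OF V y] by auto
  have pc: "proj N V y \<in> carrier_vec N" using p Vc by auto
  have "y - (y - proj N V y) = proj N V y" by (rule eq_vecI, insert y pc, auto)
  moreover have "proj N V y \<in> ocomp N (ocomp N V)"
  proof -
    have "\<forall>z\<in>ocomp N V. proj N V y \<bullet>c z = 0" using ocompD2[OF _ p Vc] by blast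
    thus ?thesis using pc unfolding ocomp_def[of N "ocomp N V"] by blast
  qed
  ultimately show ?thesis
    by (intro proj_unique[OF ocomp_carrier _ y q], auto intro: ocomp_minus[OF _ _ Vc])
qed

definition rq :: "complex mat \<Rightarrow> complex vec \<Rightarrow> real" where
  "rq H x = Re ((H *\<^sub>v x) \<bullet>c x)"

lemma rq_smult: assumes H: "H \<in> carrier_mat N N" and x: "x \<in> carrier_vec N"
  shows "rq H (a \<cdot>\<^sub>v x) = (cmod a)^2 * rq H x"
proof -
  have Hx: "H *\<^sub>v x \<in> carrier_vec N" using H x by simp
  have "(H *\<^sub>v (a \<cdot>\<^sub>v x)) \<bullet>c (a \<cdot>\<^sub>v x) = (a \<cdot>\<^sub>v (H *\<^sub>v x)) \<bullet>c (a \<cdot>\<^sub>v x)"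
    using mult_mat_vec[OF H x] by simp
  also have "\<dots> = (a * cnj a) * ((H *\<^sub>v x) \<bullet>c x)"
    using cprod_smult_left[OF Hx, of "a \<cdot>\<^sub>v x"] cprod_smult_right[OF x Hx] x by simp
  also have "a * cnj a = of_real ((cmod a)^2)" by (rule complex_norm_square[symmetric])
  finally show ?thesis unfolding rq_def by simp
qed

lemma rq_add: assumes h: "hermitian N H" and p: "p \<in> carrier_vec N" and q: "q \<in> carrier_vec N"
  shows "rq H (p + q) = rq H p + rq H q + 2 * Re ((H *\<^sub>v p) \<bullet>c q)"
proof -
  have H: "H \<in> carrier_mat N N" using h unfolding hermitian_def by blast
  have Hp: "H *\<^sub>v p \<in> carrier_vec N" and Hq: "H *\<^sub>v q \<in> carrier_vec N" using H p q by auto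
  have "H *\<^sub>v (p + q) = H *\<^sub>v p + H *\<^sub>v q" by (rule mult_add_distrib_mat_vec[OF H p q])
  hence "(H *\<^sub>v (p + q)) \<bullet>c (p + q) = (H *\<^sub>v p) \<bullet>c (p + q) + (H *\<^sub>v q) \<bullet>c (p + q)"
    using cprod_add_left[OF Hp Hq, of "p + q"] p q by simp
  also have "\<dots> = (H *\<^sub>v p) \<bullet>c p + (H *\<^sub>v p) \<bullet>c q + ((H *\<^sub>v q) \<bullet>c p + (H *\<^sub>v q) \<bullet>c q)"
    using cprod_add_right[OF p q Hp] cprod_add_right[OF p q Hq] by simp
  also have "(H *\<^sub>v q) \<bullet>c p = cnj ((H *\<^sub>v p) \<bullet>c q)"
    using herm_cprod[OF h q p] cprod_cnj[OF Hp q] by simp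
  finally show ?thesis unfolding rq_def by simp
qed

lemma interp_carrier: "H0 \<in> carrier_mat N N \<Longrightarrow> H1 \<in> carrier_mat N N \<Longrightarrow> interp H0 H1 s \<in> carrier_mat N N"
  unfolding interp_def by simp

lemma smult_mat_vec: "A \<in> carrier_mat N N \<Longrightarrow> x \<in> carrier_vec N \<Longrightarrow> (a \<cdot>\<^sub>m A) *\<^sub>v x = (a::complex) \<cdot>\<^sub>v (A *\<^sub>v x)"
  by (intro eq_vecI, auto simp: scalar_prod_def sum_distrib_left mult.assoc)

lemma interp_vec: assumes H0: "H0 \<in> carrier_mat N N" and H1: "H1 \<in> carrier_mat N N" and x: "x \<in> carrier_vec N"
  shows "interp H0 H1 s *\<^sub>v x = of_real (1 - s) \<cdot>\<^sub>v (H0 *\<^sub>v x) + of_real s \<cdot>\<^sub>v (H1 *\<^sub>v x)"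
  unfolding interp_def
  by (subst add_mult_distrib_mat_vec[of _ N N], insert H0 H1 x, auto simp: smult_mat_vec[OF H0 x] smult_mat_vec[OF H1 x])

lemma interp_herm: assumes h0: "hermitian N H0" and h1: "hermitian N H1" shows "hermitian N (interp H0 H1 s)"
proof -
  have H0: "H0 \<in> carrier_mat N N" using h0 unfolding hermitian_def by blast
  have H1: "H1 \<in> carrier_mat N N" using h1 unfolding hermitian_def by blast
  have e0: "\<And>i j. i < N \<Longrightarrow> j < N \<Longrightarrow> H0 $$ (i,j) = cnj (H0 $$ (j,i))" using h0 unfolding hermitian_def by blast
  have e1: "\<And>i j. i < N \<Longrightarrow> j < N \<Longrightarrow> H1 $$ (i,j) = cnj (H1 $$ (j,i))" using h1 unfolding hermitian_def by blast
  show ?thesis unfolding hermitian_def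
  proof (intro conjI allI impI interp_carrier[OF H0 H1])
    fix i j assume ij: "i < N" "j < N"
    have "interp H0 H1 s $$ (i,j) = of_real (1 - s) * H0 $$ (i,j) + of_real s * H1 $$ (i,j)"
      unfolding interp_def using H0 H1 ij by simp
    also have "\<dots> = of_real (1 - s) * cnj (H0 $$ (j,i)) + of_real s * cnj (H1 $$ (j,i))"
      using e0[OF ij] e1[OF ij] by simp
    also have "\<dots> = cnj (interp H0 H1 s $$ (j,i))"
      unfolding interp_def using H0 H1 ij by simp
    finally show "interp H0 H1 s $$ (i,j) = cnj (interp H0 H1 s $$ (j,i))" .
  qed
qed

lemma rq_interp: assumes H0: "H0 \<in> carrier_mat N N" and H1: "H1 \<in> carrier_mat N N" and x: "x \<in> carrier_vec N"
  shows "rq (interp H0 H1 s) x = (1 - s) * rq H0 x + s * rq H1 x"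
proof -
  have a: "H0 *\<^sub>v x \<in> carrier_vec N" "H1 *\<^sub>v x \<in> carrier_vec N" using H0 H1 x by auto
  have "(interp H0 H1 s *\<^sub>v x) \<bullet>c x = of_real (1 - s) * ((H0 *\<^sub>v x) \<bullet>c x) + of_real s * ((H1 *\<^sub>v x) \<bullet>c x)"
    unfolding interp_vec[OF H0 H1 x] using a x
    by (simp add: cprod_add_left[of _ N] cprod_smult_left[of _ N])
  thus ?thesis unfolding rq_def by simp
qed

lemma interp_mult_vec_cprod: assumes H0: "H0 \<in> carrier_mat N N" and H1: "H1 \<in> carrier_mat N N"
  and x: "x \<in> carrier_vec N" and q: "q \<in> carrier_vec N"
  shows "(interp H0 H1 s *\<^sub>v x) \<bullet>c q = of_real (1 - s) * ((H0 *\<^sub>v x) \<bullet>c q) + of_real s * ((H1 *\<^sub>v x) \<bullet>c q)"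
proof -
  have a: "H0 *\<^sub>v x \<in> carrier_vec N" "H1 *\<^sub>v x \<in> carrier_vec N" using H0 H1 x by auto
  show ?thesis unfolding interp_vec[OF H0 H1 x] using a q
    by (simp add: cprod_add_left[of _ N] cprod_smult_left[of _ N])
qed

lemma lip_cont: fixes f :: "real \<Rightarrow> real" assumes lip: "\<And>s t. \<bar>f s - f t\<bar> \<le> K * \<bar>s - t\<bar>"
  shows "continuous_on A f"
proof (rule continuous_at_imp_continuous_on, intro ballI)
  fix x
  show "isCont f x" unfolding isCont_def LIM_eq
  proof (intro allI impI)
    fix r :: real assume r: "r > 0"
    define d where "d = r / (\<bar>K\<bar> + 1)"
    have d: "d > 0" unfolding d_def using r by simp
    show "\<exists>s>0. \<forall>y. y \<noteq> x \<and> norm (y - x) < s \<longrightarrow> norm (f y - f x) < r"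
    proof (intro exI[of _ d] conjI allI impI d)
      fix y assume "y \<noteq> x \<and> norm (y - x) < d"
      hence yx: "\<bar>y - x\<bar> < d" by simp
      have "\<bar>f y - f x\<bar> \<le> K * \<bar>y - x\<bar>" by (rule lip)
      also have "\<dots> \<le> \<bar>K\<bar> * \<bar>y - x\<bar>" by (simp add: mult_right_mono)
      also have "\<dots> \<le> \<bar>K\<bar> * d" using yx by (simp add: mult_left_mono)
      also have "\<dots> < (\<bar>K\<bar> + 1) * d" using d by simp
      also have "\<dots> = r" unfolding d_def by simp
      finally show "norm (f y - f x) < r" by simp
    qed
  qed
qed

lemma two_ab: fixes a b :: real shows "2 * a * b \<le> a^2 + b^2"
  using zero_le_power2[of "a - b"] unfolding power2_diff by linarith

locale core =
  fixes N :: nat and H0 H1 :: "complex mat" and V :: "complex vec set" and \<beta> :: real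
    and a0 a1 p1 :: "complex vec"
  assumes h0: "hermitian N H0" and h1: "hermitian N H1"
  and V: "subsp N V"
  and inv0: "\<And>x. x \<in> V \<Longrightarrow> H0 *\<^sub>v x \<in> V"
  and beta: "\<And>p q. p \<in> V \<Longrightarrow> q \<in> ocomp N V \<Longrightarrow> cmod ((H1 *\<^sub>v p) \<bullet>c q) \<le> \<beta> * vnorm p * vnorm q"
  and b0: "0 \<le> \<beta>"
  and a0V: "a0 \<in> V" and na0: "vnorm a0 = 1" and ga0: "H0 *\<^sub>v a0 = of_real (lam H0 0) \<cdot>\<^sub>v a0"
  and a1: "a1 \<in> carrier_vec N" and na1: "vnorm a1 = 1" and ga1: "H1 *\<^sub>v a1 = of_real (lam H1 0) \<cdot>\<^sub>v a1"
  and p1V: "p1 \<in> V" and q1W: "a1 - p1 \<in> ocomp N V" and np1: "vnorm p1 \<le> 1/10"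
begin

lemma H0c: "H0 \<in> carrier_mat N N" using h0 unfolding hermitian_def by blast
lemma H1c: "H1 \<in> carrier_mat N N" using h1 unfolding hermitian_def by blast
lemma Vc: "V \<subseteq> carrier_vec N" using V unfolding subsp_def by auto
lemma Vsmult: "x \<in> V \<Longrightarrow> a \<cdot>\<^sub>v x \<in> V" using V unfolding subsp_def by auto
lemma Wc: "ocomp N V \<subseteq> carrier_vec N" by (rule ocomp_carrier)
lemma Wsmult: assumes q: "q \<in> ocomp N V" shows "a \<cdot>\<^sub>v q \<in> ocomp N V"
proof -
  have qc: "q \<in> carrier_vec N" using q Wc by auto
  show ?thesis unfolding ocomp_def
  proof (intro CollectI conjI ballI)
    show "a \<cdot>\<^sub>v q \<in> carrier_vec N" using qc by simp
    fix x assume x: "x \<in> V"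
    have xc: "x \<in> carrier_vec N" using x Vc by auto
    show "(a \<cdot>\<^sub>v q) \<bullet>c x = 0" using cprod_smult_left[OF qc xc] ocompD[OF q x] by simp
  qed
qed

lemma a0c: "a0 \<in> carrier_vec N" using a0V Vc by auto
lemma p1c: "p1 \<in> carrier_vec N" using p1V Vc by auto

definition q1 where "q1 = a1 - p1"
lemma q1c: "q1 \<in> carrier_vec N" unfolding q1_def using a1 p1c by simp
lemma a1pq: "a1 = p1 + q1" unfolding q1_def by (rule eq_vecI, insert a1 p1c, auto)
lemma pq1: "p1 \<bullet>c q1 = 0" unfolding q1_def by (rule ocompD2[OF q1W p1V Vc])
lemma nq1: "(vnorm q1)^2 = 1 - (vnorm p1)^2"
  using pythagoras[OF p1c q1c pq1] a1pq na1 by simp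
lemma nq1_ge: "vnorm q1 \<ge> 1/10"
proof -
  have "(vnorm p1)^2 \<le> (1/10)^2" using np1 vnorm_nonneg[of p1] by (intro power_mono, auto)
  hence "(vnorm p1)^2 \<le> 1/100" by (simp add: power2_eq_square)
  hence "1/100 \<le> (vnorm q1)^2" using nq1 by linarith
  hence "(1/10)^2 \<le> (vnorm q1)^2" by (simp add: power2_eq_square)
  thus ?thesis using vnorm_nonneg[of q1] by (rule power2_le_imp_le)
qed

definition UV where "UV = {x \<in> V. vnorm x = 1}"
definition UW where "UW = {x \<in> ocomp N V. vnorm x = 1}"
definition R :: "real \<Rightarrow> complex vec \<Rightarrow> real" where "R s x = (1 - s) * rq H0 x + s * rq H1 x"
definition EV where "EV s = (INF x\<in>UV. R s x)"
definition EW where "EW s = (INF x\<in>UW. R s x)"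
definition L where "L = fro H0 + fro H1"

lemma UVc: "UV \<subseteq> carrier_vec N" unfolding UV_def using Vc by auto
lemma UWc: "UW \<subseteq> carrier_vec N" unfolding UW_def using Wc by auto

lemma normalize: assumes xc: "x \<in> carrier_vec N" and x0: "x \<noteq> 0\<^sub>v N"
  shows "vnorm ((1 / of_real (vnorm x)) \<cdot>\<^sub>v x) = 1" "vnorm x > 0"
proof -
  show nx: "vnorm x > 0" using vnorm_zero_iff[OF xc] x0 vnorm_nonneg[of x] by linarith
  show "vnorm ((1 / of_real (vnorm x)) \<cdot>\<^sub>v x) = 1" unfolding vnorm_smult[OF xc] using nx
    by (simp add: norm_divide)
qed

lemma UV_ne: "UV \<noteq> {}" unfolding UV_def using a0V na0 by auto
lemma q1_ne: "q1 \<noteq> 0\<^sub>v N" using nq1_ge vnorm_zero_iff[OF q1c] by auto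
definition w1 where "w1 = (1 / of_real (vnorm q1)) \<cdot>\<^sub>v q1"
lemma w1UW: "w1 \<in> UW" unfolding UW_def w1_def using normalize[OF q1c q1_ne] Wsmult q1W q1_def by auto
lemma UW_ne: "UW \<noteq> {}" using w1UW by auto

lemma rq_abs: assumes "H \<in> carrier_mat N N" "x \<in> carrier_vec N" shows "\<bar>rq H x\<bar> \<le> fro H * (vnorm x)^2"
  unfolding rq_def using rq_bound[OF assms] abs_Re_le_cmod[of "(H *\<^sub>v x) \<bullet>c x"] by linarith

lemma R_lip: assumes x: "x \<in> carrier_vec N" and nx: "vnorm x = 1" shows "\<bar>R s x - R t x\<bar> \<le> L * \<bar>s - t\<bar>"
proof -
  have "R s x - R t x = (t - s) * rq H0 x + (s - t) * rq H1 x" unfolding R_def by (simp add: algebra_simps)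
  also have "\<bar>\<dots>\<bar> \<le> \<bar>s - t\<bar> * \<bar>rq H0 x\<bar> + \<bar>s - t\<bar> * \<bar>rq H1 x\<bar>"
    by (metis (no_types, opaque_lifting) abs_minus_commute abs_mult abs_triangle_ineq)
  also have "\<dots> \<le> \<bar>s - t\<bar> * fro H0 + \<bar>s - t\<bar> * fro H1"
    using rq_abs[OF H0c x] rq_abs[OF H1c x] nx by (intro add_mono mult_left_mono, auto)
  finally show ?thesis unfolding L_def by (simp add: algebra_simps)
qed

lemma R_lower: assumes x: "x \<in> carrier_vec N" and nx: "vnorm x = 1" shows "- (\<bar>1 - s\<bar> * fro H0 + \<bar>s\<bar> * fro H1) \<le> R s x"
proof -
  have "\<bar>R s x\<bar> \<le> \<bar>1 - s\<bar> * \<bar>rq H0 x\<bar> + \<bar>s\<bar> * \<bar>rq H1 x\<bar>" unfolding R_def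
    by (metis abs_mult abs_triangle_ineq)
  also have "\<dots> \<le> \<bar>1 - s\<bar> * fro H0 + \<bar>s\<bar> * fro H1"
    using rq_abs[OF H0c x] rq_abs[OF H1c x] nx by (intro add_mono mult_left_mono, auto)
  finally show ?thesis by linarith
qed

lemma bddV: "bdd_below (R s ` UV)"
  by (rule bdd_belowI2[of _ "- (\<bar>1 - s\<bar> * fro H0 + \<bar>s\<bar> * fro H1)"], rule R_lower, insert UVc, auto simp: UV_def)
lemma bddW: "bdd_below (R s ` UW)"
  by (rule bdd_belowI2[of _ "- (\<bar>1 - s\<bar> * fro H0 + \<bar>s\<bar> * fro H1)"], rule R_lower, insert UWc, auto simp: UW_def)

lemma E_lip_gen: assumes U: "U \<subseteq> carrier_vec N" "U \<noteq> {}" and un: "\<And>x. x \<in> U \<Longrightarrow> vnorm x = 1"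
  and bdd: "\<And>s. bdd_below (R s ` U)"
  shows "\<bar>(INF x\<in>U. R s x) - (INF x\<in>U. R t x)\<bar> \<le> L * \<bar>s - t\<bar>"
proof -
  have one: "(INF x\<in>U. R a x) - L * \<bar>a - b\<bar> \<le> (INF x\<in>U. R b x)" for a b
  proof (rule cINF_greatest[OF U(2)])
    fix x assume x: "x \<in> U"
    have "(INF x\<in>U. R a x) \<le> R a x" by (rule cINF_lower[OF bdd x])
    also have "\<dots> \<le> R b x + L * \<bar>a - b\<bar>" using R_lip[of x a b] x U un by force
    finally show "(INF x\<in>U. R a x) - L * \<bar>a - b\<bar> \<le> R b x" by simp
  qed
  show ?thesis using one[of s t] one[of t s] by (simp add: abs_minus_commute abs_le_iff)
qed

lemma cont: "continuous_on {0..1} (\<lambda>s. EW s - EV s)"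
proof (rule lip_cont[of _ "2 * L"])
  fix s t
  have "\<bar>EW s - EW t\<bar> \<le> L * \<bar>s - t\<bar>" unfolding EW_def
    by (rule E_lip_gen[OF UWc UW_ne _ bddW], auto simp: UW_def)
  moreover have "\<bar>EV s - EV t\<bar> \<le> L * \<bar>s - t\<bar>" unfolding EV_def
    by (rule E_lip_gen[OF UVc UV_ne _ bddV], auto simp: UV_def)
  ultimately show "\<bar>EW s - EV s - (EW t - EV t)\<bar> \<le> 2 * L * \<bar>s - t\<bar>" by linarith
qed

lemma R_smult: "x \<in> carrier_vec N \<Longrightarrow> R s (a \<cdot>\<^sub>v x) = (cmod a)^2 * R s x"
  unfolding R_def using rq_smult[OF H0c] rq_smult[OF H1c] by (simp add: algebra_simps)

lemma R_interp: "x \<in> carrier_vec N \<Longrightarrow> R s x = rq (interp H0 H1 s) x"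
  unfolding R_def using rq_interp[OF H0c H1c] by simp

lemma EV_le: assumes x: "x \<in> V" shows "EV s * (vnorm x)^2 \<le> R s x"
proof (cases "x = 0\<^sub>v N")
  case True
  have "R s x = R s (0 \<cdot>\<^sub>v x)" using True by simp
  also have "\<dots> = 0" using R_smult[of x s 0] x Vc by auto
  finally show ?thesis using True vnorm_zero_iff[of x N] by simp
next
  case False
  have xc: "x \<in> carrier_vec N" using x Vc by auto
  define u where "u = (1 / of_real (vnorm x)) \<cdot>\<^sub>v x"
  have nx: "vnorm x > 0" by (rule normalize(2)[OF xc False])
  have uU: "u \<in> UV" unfolding UV_def u_def using normalize(1)[OF xc False] Vsmult[OF x] by auto
  have "EV s \<le> R s u" unfolding EV_def by (rule cINF_lower[OF bddV uU])
  also have "R s u = R s x / (vnorm x)^2" unfolding u_def R_smult[OF xc] using nx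
    by (simp add: norm_divide power_divide)
  finally show ?thesis using nx by (simp add: pos_le_divide_eq)
qed

lemma EW_le: assumes x: "x \<in> ocomp N V" shows "EW s * (vnorm x)^2 \<le> R s x"
proof (cases "x = 0\<^sub>v N")
  case True
  have xc: "x \<in> carrier_vec N" using x Wc by auto
  have "R s x = R s (0 \<cdot>\<^sub>v x)" using True by simp
  also have "\<dots> = 0" using R_smult[OF xc, of s 0] by auto
  finally show ?thesis using True vnorm_zero_iff[of x N] by simp
next
  case False
  have xc: "x \<in> carrier_vec N" using x Wc by auto
  define u where "u = (1 / of_real (vnorm x)) \<cdot>\<^sub>v x"
  have nx: "vnorm x > 0" by (rule normalize(2)[OF xc False])
  have uU: "u \<in> UW" unfolding UW_def u_def using normalize(1)[OF xc False] Wsmult[OF x] by auto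
  have "EW s \<le> R s u" unfolding EW_def by (rule cINF_lower[OF bddW uU])
  also have "R s u = R s x / (vnorm x)^2" unfolding u_def R_smult[OF xc] using nx
    by (simp add: norm_divide power_divide)
  finally show ?thesis using nx by (simp add: pos_le_divide_eq)
qed

end

context core begin

lemma N2: "2 \<le> N"
proof -
  have w1c: "w1 \<in> carrier_vec N" using w1UW UWc by auto
  have w1W: "w1 \<in> ocomp N V" and nw1: "vnorm w1 = 1" using w1UW unfolding UW_def by auto
  have aa: "a0 \<bullet>c a0 = 1" using cprod_self_real[OF a0c] vnorm_sq[OF a0c] na0 by simp
  have ww: "w1 \<bullet>c w1 = 1" using cprod_self_real[OF w1c] vnorm_sq[OF w1c] nw1 by simp
  have o1: "orth N [a0]" unfolding orth_def using a0c aa by auto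
  have "orth N ([a0] @ [w1])" by (rule orth_append[OF o1 w1c ww], insert ocompD[OF w1W a0V], auto)
  from orth_length[OF this] show ?thesis by simp
qed

lemma N0: "0 < N" using N2 by simp

lemma cross: assumes s: "0 \<le> s" and p: "p \<in> V" and q: "q \<in> ocomp N V"
  shows "cmod ((interp H0 H1 s *\<^sub>v p) \<bullet>c q) \<le> s * \<beta> * vnorm p * vnorm q"
proof -
  have pc: "p \<in> carrier_vec N" using p Vc by auto
  have qc: "q \<in> carrier_vec N" using q Wc by auto
  have "(H0 *\<^sub>v p) \<bullet>c q = 0" by (rule ocompD2[OF q inv0[OF p] Vc])
  hence "(interp H0 H1 s *\<^sub>v p) \<bullet>c q = of_real s * ((H1 *\<^sub>v p) \<bullet>c q)"
    unfolding interp_mult_vec_cprod[OF H0c H1c pc qc] by simp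
  hence "cmod ((interp H0 H1 s *\<^sub>v p) \<bullet>c q) = s * cmod ((H1 *\<^sub>v p) \<bullet>c q)" using s by (simp add: norm_mult)
  also have "\<dots> \<le> s * (\<beta> * vnorm p * vnorm q)" by (rule mult_left_mono[OF beta[OF p q] s])
  finally show ?thesis by (simp add: mult.assoc)
qed

lemma f0: "EV 0 \<le> lam H0 0" "lam H0 0 \<le> EW 0"
proof -
  obtain g :: "complex vec" where hf: "\<forall>x\<in>carrier_vec N. lam H0 0 * (vnorm x)^2 \<le> Re ((H0 *\<^sub>v x) \<bullet>c x)"
    using herm_facts[OF h0 N0] by blast
  have aa: "a0 \<bullet>c a0 = 1" using cprod_self_real[OF a0c] vnorm_sq[OF a0c] na0 by simp
  have "R 0 a0 = lam H0 0" unfolding R_def rq_def ga0 using cprod_smult_left[OF a0c a0c] aa by simp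
  moreover have "a0 \<in> UV" unfolding UV_def using a0V na0 by simp
  ultimately show "EV 0 \<le> lam H0 0" unfolding EV_def using cINF_lower[OF bddV] by metis
  show "lam H0 0 \<le> EW 0" unfolding EW_def
  proof (rule cINF_greatest[OF UW_ne])
    fix x assume x: "x \<in> UW"
    hence xc: "x \<in> carrier_vec N" and nx: "vnorm x = 1" using UWc unfolding UW_def by auto
    show "lam H0 0 \<le> R 0 x" unfolding R_def rq_def using hf xc nx by force
  qed
qed

lemma f1: "lam H1 0 \<le> EV 1" "EW 1 \<le> lam H1 0 + \<beta>"
proof -
  obtain g :: "complex vec" where hf: "\<forall>x\<in>carrier_vec N. lam H1 0 * (vnorm x)^2 \<le> Re ((H1 *\<^sub>v x) \<bullet>c x)"
    using herm_facts[OF h1 N0] by blast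
  show "lam H1 0 \<le> EV 1" unfolding EV_def
  proof (rule cINF_greatest[OF UV_ne])
    fix x assume x: "x \<in> UV"
    hence xc: "x \<in> carrier_vec N" and nx: "vnorm x = 1" using UVc unfolding UV_def by auto
    show "lam H1 0 \<le> R 1 x" unfolding R_def rq_def using hf xc nx by force
  qed
  define lm where "lm = lam H1 0"
  have H1p: "H1 *\<^sub>v p1 \<in> carrier_vec N" using H1c p1c by simp
  have "H1 *\<^sub>v q1 = H1 *\<^sub>v a1 - H1 *\<^sub>v p1" unfolding q1_def by (rule mult_minus_distrib_mat_vec[OF H1c a1 p1c])
  hence "(H1 *\<^sub>v q1) \<bullet>c q1 = (of_real lm \<cdot>\<^sub>v a1) \<bullet>c q1 - (H1 *\<^sub>v p1) \<bullet>c q1"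
    unfolding ga1 lm_def using cprod_minus_left[of "of_real (lam H1 0) \<cdot>\<^sub>v a1" N "H1 *\<^sub>v p1" q1] a1 H1p q1c by simp
  also have "(of_real lm \<cdot>\<^sub>v a1) \<bullet>c q1 = of_real lm * (a1 \<bullet>c q1)" by (rule cprod_smult_left[OF a1 q1c])
  also have "a1 \<bullet>c q1 = p1 \<bullet>c q1 + q1 \<bullet>c q1" unfolding a1pq[symmetric] using a1pq cprod_add_left[OF p1c q1c q1c] by simp
  also have "q1 \<bullet>c q1 = of_real ((vnorm q1)^2)" using cprod_self_real[OF q1c] vnorm_sq[OF q1c] by simp
  finally have eq: "rq H1 q1 = lm * (vnorm q1)^2 - Re ((H1 *\<^sub>v p1) \<bullet>c q1)" unfolding rq_def pq1 by simp
  have "Re ((H1 *\<^sub>v p1) \<bullet>c q1) \<ge> - (\<beta> * vnorm p1 * vnorm q1)"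
    using beta[OF p1V] q1W q1_def abs_Re_le_cmod[of "(H1 *\<^sub>v p1) \<bullet>c q1"] by (smt (verit))
  hence rq1: "rq H1 q1 \<le> lm * (vnorm q1)^2 + \<beta> * vnorm p1 * vnorm q1" unfolding eq by simp
  have nq: "vnorm q1 > 0" using nq1_ge by simp
  have "EW 1 \<le> R 1 w1" unfolding EW_def by (rule cINF_lower[OF bddW w1UW])
  also have "R 1 w1 = rq H1 q1 / (vnorm q1)^2" unfolding w1_def R_smult[OF q1c]
    by (simp add: R_def norm_divide power_divide)
  also have "\<dots> \<le> (lm * (vnorm q1)^2 + \<beta> * vnorm p1 * vnorm q1) / (vnorm q1)^2"
    by (rule divide_right_mono[OF rq1], simp)
  also have "\<dots> = lm + \<beta> * (vnorm p1 / vnorm q1)" using nq by (simp add: field_simps power2_eq_square)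
  also have "\<dots> \<le> lm + \<beta> * 1"
  proof -
    have "vnorm p1 / vnorm q1 \<le> 1" using np1 nq1_ge nq by (simp add: divide_le_eq)
    hence "\<beta> * (vnorm p1 / vnorm q1) \<le> \<beta> * 1" using b0 by (rule mult_left_mono)
    thus ?thesis by simp
  qed
  finally show "EW 1 \<le> lam H1 0 + \<beta>" unfolding lm_def by simp
qed

lemma ivt: "\<exists>s. 0 \<le> s \<and> s \<le> 1 \<and> \<bar>EW s - EV s\<bar> \<le> \<beta>"
proof (cases "EW 1 - EV 1 \<ge> 0")
  case True
  thus ?thesis using f1 by (intro exI[of _ 1], auto)
next
  case False
  have "EW 1 - EV 1 \<le> 0" "0 \<le> EW 0 - EV 0" using False f0 by auto
  from IVT2'[of "\<lambda>s. EW s - EV s", OF this _ cont] obtain s where "0 \<le> s" "s \<le> 1" "EW s - EV s = 0" by auto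
  thus ?thesis using b0 by (intro exI[of _ s], auto)
qed

end

lemma half_lem: "(c::real) \<le> P \<Longrightarrow> 2 * P \<le> A + B \<Longrightarrow> c \<le> (A + B) / 2" by argo
lemma neg_lem: "(A::real) + B = b \<Longrightarrow> - (A + B) / 2 \<le> r \<Longrightarrow> - b \<le> 2 * r" by argo

context core begin

lemma gap: assumes s0: "0 \<le> s" and s1: "s \<le> 1"
  shows "lam (interp H0 H1 s) 1 - lam (interp H0 H1 s) 0 \<le> \<bar>EW s - EV s\<bar> + 2 * \<beta>"
proof -
  define H where "H = interp H0 H1 s"
  have hH: "hermitian N H" unfolding H_def by (rule interp_herm[OF h0 h1])
  have Hc: "H \<in> carrier_mat N N" unfolding H_def by (rule interp_carrier[OF H0c H1c])
  obtain g where gc: "g \<in> carrier_vec N" and ng: "vnorm g = 1" and rg: "Re ((H *\<^sub>v g) \<bullet>c g) = lam H 0"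
    and lb1: "\<forall>z\<in>carrier_vec N. z \<bullet>c g = 0 \<longrightarrow> lam H 1 * (vnorm z)^2 \<le> Re ((H *\<^sub>v z) \<bullet>c z)"
    using herm_facts[OF hH N0] by blast
  have RH: "R s x = rq H x" if "x \<in> carrier_vec N" for x unfolding H_def by (rule R_interp[OF that])
  have crossH: "Re ((H *\<^sub>v p) \<bullet>c q) \<ge> - (\<beta> * (vnorm p)^2 + \<beta> * (vnorm q)^2) / 2"
    and crossH': "Re ((H *\<^sub>v p) \<bullet>c q) \<le> (\<beta> * (vnorm p)^2 + \<beta> * (vnorm q)^2) / 2"
    if p: "p \<in> V" and q: "q \<in> ocomp N V" for p q
  proof -
    have c: "cmod ((H *\<^sub>v p) \<bullet>c q) \<le> s * \<beta> * vnorm p * vnorm q" unfolding H_def by (rule cross[OF s0 p q])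
    have "s * (\<beta> * (vnorm p * vnorm q)) \<le> 1 * (\<beta> * (vnorm p * vnorm q))"
      by (rule mult_right_mono[OF s1], insert b0 vnorm_nonneg[of p] vnorm_nonneg[of q], simp)
    hence c2: "s * \<beta> * vnorm p * vnorm q \<le> \<beta> * (vnorm p * vnorm q)" by (simp add: mult.assoc)
    have X: "\<beta> * (2 * vnorm p * vnorm q) \<le> \<beta> * ((vnorm p)^2 + (vnorm q)^2)"
      by (rule mult_left_mono[OF two_ab b0])
    have X': "2 * (\<beta> * (vnorm p * vnorm q)) \<le> \<beta> * (vnorm p)^2 + \<beta> * (vnorm q)^2"
      using X by (simp add: algebra_simps)
    have "cmod ((H *\<^sub>v p) \<bullet>c q) \<le> (\<beta> * (vnorm p)^2 + \<beta> * (vnorm q)^2) / 2" by (rule half_lem[OF order.trans[OF c c2] X'])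
    thus "Re ((H *\<^sub>v p) \<bullet>c q) \<ge> - (\<beta> * (vnorm p)^2 + \<beta> * (vnorm q)^2) / 2"
      "Re ((H *\<^sub>v p) \<bullet>c q) \<le> (\<beta> * (vnorm p)^2 + \<beta> * (vnorm q)^2) / 2"
      using abs_Re_le_cmod[of "(H *\<^sub>v p) \<bullet>c q"] by linarith+
  qed
  define p where "p = proj N V g"
  define q where "q = g - p"
  have pV: "p \<in> V" and qW: "q \<in> ocomp N V" unfolding p_def q_def using projV[OF V gc] by auto
  have pc: "p \<in> carrier_vec N" and qc: "q \<in> carrier_vec N" using pV qW Vc Wc by auto
  have gpq: "g = p + q" unfolding q_def by (rule eq_vecI, insert gc pc, auto)
  have pq0: "p \<bullet>c q = 0" by (rule ocompD2[OF qW pV Vc])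
  have n1: "(vnorm p)^2 + (vnorm q)^2 = 1" using pythagoras[OF pc qc pq0] gpq ng by simp
  have "lam H 0 = rq H (p + q)" unfolding rg[symmetric] gpq[symmetric] rq_def ..
  also have "\<dots> = rq H p + rq H q + 2 * Re ((H *\<^sub>v p) \<bullet>c q)" by (rule rq_add[OF hH pc qc])
  finally have l0: "lam H 0 = R s p + R s q + 2 * Re ((H *\<^sub>v p) \<bullet>c q)" using RH[OF pc] RH[OF qc] by simp
  have "min (EV s) (EW s) * ((vnorm p)^2 + (vnorm q)^2) \<le> EV s * (vnorm p)^2 + EW s * (vnorm q)^2"
    by (simp add: distrib_left add_mono mult_right_mono)
  also have "\<dots> \<le> R s p + R s q" by (intro add_mono EV_le[OF pV] EW_le[OF qW])
  finally have "min (EV s) (EW s) \<le> R s p + R s q" using n1 by simp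
  moreover have "2 * Re ((H *\<^sub>v p) \<bullet>c q) \<ge> - \<beta>"
  proof -
    have "\<beta> * (vnorm p)^2 + \<beta> * (vnorm q)^2 = \<beta>" using n1 by (metis distrib_left mult.right_neutral)
    thus ?thesis using crossH[OF pV qW] by (rule neg_lem)
  qed
  ultimately have low: "min (EV s) (EW s) - \<beta> \<le> lam H 0" using l0 by linarith
  have up: "lam H 1 \<le> max (EV s) (EW s) + \<beta> + e" if e: "e > 0" for e
  proof -
    have "EV s < EV s + e" using e by simp
    then obtain v where vU: "v \<in> UV" and Rv: "R s v < EV s + e"
      unfolding EV_def using cINF_less_iff[OF UV_ne bddV] by blast
    have "EW s < EW s + e" using e by simp
    then obtain w where wU: "w \<in> UW" and Rw: "R s w < EW s + e"
      unfolding EW_def using cINF_less_iff[OF UW_ne bddW] by blast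
    have vV: "v \<in> V" and nv: "vnorm v = 1" using vU unfolding UV_def by auto
    have wW: "w \<in> ocomp N V" and nw: "vnorm w = 1" using wU unfolding UW_def by auto
    have vc: "v \<in> carrier_vec N" and wc: "w \<in> carrier_vec N" using vV wW Vc Wc by auto
    obtain al ga where nz: "\<not> (al = 0 \<and> ga = 0)" and perp: "al * (v \<bullet>c g) + ga * (w \<bullet>c g) = 0"
    proof (cases "v \<bullet>c g = 0")
      case True thus ?thesis using that[of 1 0] by simp
    next
      case False thus ?thesis using that[of "w \<bullet>c g" "- (v \<bullet>c g)"] by (simp add: mult.commute)
    qed
    define p' where "p' = al \<cdot>\<^sub>v v"
    define q' where "q' = ga \<cdot>\<^sub>v w"
    have p'V: "p' \<in> V" unfolding p'_def by (rule Vsmult[OF vV])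
    have q'W: "q' \<in> ocomp N V" unfolding q'_def by (rule Wsmult[OF wW])
    have p'c: "p' \<in> carrier_vec N" and q'c: "q' \<in> carrier_vec N" unfolding p'_def q'_def using vc wc by auto
    define z where "z = p' + q'"
    have zc: "z \<in> carrier_vec N" unfolding z_def using p'c q'c by simp
    have "z \<bullet>c g = p' \<bullet>c g + q' \<bullet>c g" unfolding z_def by (rule cprod_add_left[OF p'c q'c gc])
    also have "p' \<bullet>c g = al * (v \<bullet>c g)" unfolding p'_def by (rule cprod_smult_left[OF vc gc])
    also have "q' \<bullet>c g = ga * (w \<bullet>c g)" unfolding q'_def by (rule cprod_smult_left[OF wc gc])
    finally have zg: "z \<bullet>c g = 0" using perp by simp
    have npq: "p' \<bullet>c q' = 0" by (rule ocompD2[OF q'W p'V Vc])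
    have np': "vnorm p' = cmod al" unfolding p'_def vnorm_smult[OF vc] nv by simp
    have nq': "vnorm q' = cmod ga" unfolding q'_def vnorm_smult[OF wc] nw by simp
    define m where "m = (cmod al)^2 + (cmod ga)^2"
    have nz2: "(vnorm z)^2 = m" unfolding z_def m_def pythagoras[OF p'c q'c npq] np' nq' ..
    have m0: "m > 0" unfolding m_def using nz by (cases "al = 0", auto intro: add_pos_nonneg add_nonneg_pos)
    have e1: "rq H p' = (cmod al)^2 * R s v" using RH[OF p'c] R_smult[OF vc, of s al] unfolding p'_def by simp
    have e2: "rq H q' = (cmod ga)^2 * R s w" using RH[OF q'c] R_smult[OF wc, of s ga] unfolding q'_def by simp
    have bm: "\<beta> * m = \<beta> * (cmod al)^2 + \<beta> * (cmod ga)^2" unfolding m_def by (simp add: distrib_left)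
    have e3: "2 * Re ((H *\<^sub>v p') \<bullet>c q') \<le> \<beta> * m" using crossH'[OF p'V q'W] np' nq' bm by simp
    have "lam H 1 * m \<le> Re ((H *\<^sub>v z) \<bullet>c z)" using lb1 zc zg nz2 by force
    also have "\<dots> = rq H p' + rq H q' + 2 * Re ((H *\<^sub>v p') \<bullet>c q')" unfolding z_def rq_def[symmetric]
      by (rule rq_add[OF hH p'c q'c])
    finally have "lam H 1 * m \<le> (cmod al)^2 * R s v + (cmod ga)^2 * R s w + \<beta> * m" using e1 e2 e3 by linarith
    also have "\<dots> \<le> (cmod al)^2 * (max (EV s) (EW s) + e) + (cmod ga)^2 * (max (EV s) (EW s) + e) + \<beta> * m"
      using Rv Rw b0 by (intro add_mono mult_left_mono, auto)
    also have "\<dots> = (max (EV s) (EW s) + e + \<beta>) * m" unfolding m_def by (simp add: algebra_simps)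
    finally show ?thesis using m0 by simp
  qed
  have "lam H 1 - lam H 0 \<le> \<bar>EW s - EV s\<bar> + 2 * \<beta>"
  proof (rule field_le_epsilon)
    fix e :: real assume e: "e > 0"
    have "lam H 1 - lam H 0 \<le> (max (EV s) (EW s) + \<beta> + e) - (min (EV s) (EW s) - \<beta>)"
      using up[OF e] low by linarith
    also have "\<dots> = \<bar>EW s - EV s\<bar> + 2 * \<beta> + e" by (simp add: max_def min_def)
    finally show "lam H 1 - lam H 0 \<le> \<bar>EW s - EV s\<bar> + 2 * \<beta> + e" .
  qed
  thus ?thesis unfolding H_def .
qed

lemma gap_nonneg: "0 \<le> lam (interp H0 H1 s) 1 - lam (interp H0 H1 s) 0"
  using herm_facts[OF interp_herm[OF h0 h1] N0] N2 by auto

lemma main: "(INF s\<in>{0..1::real}. lam (interp H0 H1 s) 1 - lam (interp H0 H1 s) 0) \<le> 3 * \<beta>"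
proof -
  obtain s where s: "0 \<le> s" "s \<le> 1" "\<bar>EW s - EV s\<bar> \<le> \<beta>" using ivt by blast
  have "(INF s\<in>{0..1::real}. lam (interp H0 H1 s) 1 - lam (interp H0 H1 s) 0) \<le> lam (interp H0 H1 s) 1 - lam (interp H0 H1 s) 0"
    by (rule cINF_lower, rule bdd_belowI2[of _ 0], rule gap_nonneg, insert s, auto)
  also have "\<dots> \<le> 3 * \<beta>" using gap[OF s(1,2)] s(3) by linarith
  finally show ?thesis .
qed

end

lemma beta_powr: fixes b c :: real assumes b: "0 \<le> b" and bo: "b \<le> c"
  shows "b \<le> (b * c^3) powr (1/4)"
proof (cases "b = 0")
  case True thus ?thesis by simp
next
  case False
  hence bp: "b > 0" using b by simp
  have "b^3 \<le> c^3" by (rule power_mono[OF bo b])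
  hence "b * b^3 \<le> b * c^3" by (rule mult_left_mono[OF _ b])
  hence b4: "b^4 \<le> b * c^3" by (simp add: power_Suc[symmetric] numeral_eq_Suc)
  have "b = (b powr 4) powr (1/4)" unfolding powr_powr using bp by simp
  also have "b powr 4 = b^4" using powr_realpow[OF bp, of 4] by simp
  also have "(b^4) powr (1/4) \<le> (b * c^3) powr (1/4)" by (rule powr_mono2, insert b4 bp, auto)
  finally show ?thesis .
qed

lemma projW_norm: assumes V: "subsp N V" and y: "y \<in> carrier_vec N"
  shows "vnorm (proj N (ocomp N V) y) \<le> vnorm y"
proof -
  have Vc: "V \<subseteq> carrier_vec N" using V unfolding subsp_def by auto
  define p where "p = proj N V y"
  have pV: "p \<in> V" and qW: "y - p \<in> ocomp N V" unfolding p_def using projV[OF V y] by auto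
  have pc: "p \<in> carrier_vec N" using pV Vc by auto
  have qc: "y - p \<in> carrier_vec N" using y pc by simp
  have "y = p + (y - p)" by (rule eq_vecI, insert y pc, auto)
  hence "(vnorm y)^2 = (vnorm p)^2 + (vnorm (y - p))^2"
    using pythagoras[OF pc qc ocompD2[OF qW pV Vc]] by simp
  hence "(vnorm (y - p))^2 \<le> (vnorm y)^2" by simp
  hence "vnorm (y - p) \<le> vnorm y" by (rule power2_le_imp_le, simp add: vnorm_nonneg)
  thus ?thesis unfolding projW[OF V y] p_def .
qed

theorem lemma2:
  "\<exists>C::real. C > 0 \<and>
    (\<forall>(n::nat) H0 H1 a0 a1 S V.
       hermitian (2^n) H0 \<longrightarrow> hermitian (2^n) H1 \<longrightarrow>
       ground_state (2^n) H0 a0 \<longrightarrow> ground_state (2^n) H1 a1 \<longrightarrow>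
       (\<forall>v\<in>S. \<exists>e. eigenvector H0 v e) \<longrightarrow>
       V = cspan (2^n) S \<longrightarrow>
       vnorm (proj (2^n) V a0) = 1 \<longrightarrow>
       vnorm (proj (2^n) V a1) \<le> 1/10 \<longrightarrow>
       (INF s\<in>{0..1::real}. lam (interp H0 H1 s) 1 - lam (interp H0 H1 s) 0)
         \<le> C * (escape_rate (2^n) V H1 * opnorm (H0 - H1) ^ 3) powr (1/4))"
proof (intro exI[of _ 3] conjI allI impI)
  fix n :: nat and H0 H1 :: "complex mat" and a0 a1 :: "complex vec" and S V :: "complex vec set"
  define N where "N = (2::nat)^n"
  assume h0: "hermitian (2^n) H0" and h1: "hermitian (2^n) H1"
    and g0: "ground_state (2^n) H0 a0" and g1: "ground_state (2^n) H1 a1"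
    and ev: "\<forall>v\<in>S. \<exists>e. eigenvector H0 v e" and VS: "V = cspan (2^n) S"
    and pa0: "vnorm (proj (2^n) V a0) = 1" and pa1: "vnorm (proj (2^n) V a1) \<le> 1/10"
  have h0: "hermitian N H0" and h1: "hermitian N H1" using h0 h1 unfolding N_def by auto
  have H0c: "H0 \<in> carrier_mat N N" and H1c: "H1 \<in> carrier_mat N N"
    using h0 h1 unfolding hermitian_def by blast+
  have a0c: "a0 \<in> carrier_vec N" and na0: "vnorm a0 = 1" and ga0: "H0 *\<^sub>v a0 = of_real (lam H0 0) \<cdot>\<^sub>v a0"
    using g0 unfolding ground_state_def N_def by auto
  have a1c: "a1 \<in> carrier_vec N" and na1: "vnorm a1 = 1" and ga1: "H1 *\<^sub>v a1 = of_real (lam H1 0) \<cdot>\<^sub>v a1"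
    using g1 unfolding ground_state_def N_def by auto
  have Sc: "S \<subseteq> carrier_vec N"
  proof
    fix v assume "v \<in> S"
    then obtain e where "eigenvector H0 v e" using ev by auto
    thus "v \<in> carrier_vec N" unfolding eigenvector_def using H0c by auto
  qed
  have VN: "V = cspan N S" using VS unfolding N_def by simp
  have V: "subsp N V" unfolding VN by (rule cspan_subsp[OF Sc])
  have Vc: "V \<subseteq> carrier_vec N" using V unfolding subsp_def by auto
  have inv0: "H0 *\<^sub>v x \<in> V" if "x \<in> V" for x unfolding VN by (rule cspan_invariant[OF Sc H0c ev that[unfolded VN]])
  have pa0': "vnorm (proj N V a0) = 1" and pa1': "vnorm (proj N V a1) \<le> 1/10" using pa0 pa1 unfolding N_def by auto
  have a0V: "a0 \<in> V"
  proof -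
    define p where "p = proj N V a0"
    have pV: "p \<in> V" and qW: "a0 - p \<in> ocomp N V" unfolding p_def using projV[OF V a0c] by auto
    have pc: "p \<in> carrier_vec N" using pV Vc by auto
    have qc: "a0 - p \<in> carrier_vec N" using a0c pc by simp
    have e: "a0 = p + (a0 - p)" by (rule eq_vecI, insert a0c pc, auto)
    have "(vnorm a0)^2 = (vnorm p)^2 + (vnorm (a0 - p))^2"
      by (subst e, rule pythagoras[OF pc qc ocompD2[OF qW pV Vc]])
    hence "vnorm (a0 - p) = 0" using na0 pa0' unfolding p_def by simp
    hence "a0 - p = 0\<^sub>v N" using vnorm_zero_iff[OF qc] by simp
    hence "a0 = p"
    proof -
      assume z: "a0 - p = 0\<^sub>v N"
      show "a0 = p"
      proof (rule eq_vecI)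
        fix i assume "i < dim_vec p"
        hence i: "i < N" using pc by simp
        from arg_cong[OF z, of "\<lambda>v. v $ i"] have "a0 $ i - p $ i = 0" using a0c pc i by simp
        thus "a0 $ i = p $ i" by simp
      qed (insert a0c pc, simp)
    qed
    thus ?thesis using pV by simp
  qed
  define B where "B = {vnorm (proj N (ocomp N V) (H1 *\<^sub>v v)) | v. v \<in> V \<and> vnorm v = 1}"
  have esc: "escape_rate (2^n) V H1 = Sup B" unfolding escape_rate_def B_def N_def ..
  have Bbound: "x \<le> fro H1" if xB: "x \<in> B" for x
  proof -
    obtain v where v: "v \<in> V" "vnorm v = 1" and x: "x = vnorm (proj N (ocomp N V) (H1 *\<^sub>v v))"
      using xB unfolding B_def by blast
    have vc: "v \<in> carrier_vec N" using v Vc by auto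
    have "x \<le> vnorm (H1 *\<^sub>v v)" unfolding x by (rule projW_norm[OF V], insert H1c vc, simp)
    also have "\<dots> \<le> fro H1 * vnorm v" by (rule mat_vec_bound[OF H1c vc])
    finally show ?thesis using v by simp
  qed
  have Bbdd: "bdd_above B" using Bbound by (intro bdd_aboveI, auto)
  have a0B: "vnorm (proj N (ocomp N V) (H1 *\<^sub>v a0)) \<in> B" unfolding B_def using a0V na0 by auto
  define \<beta> where "\<beta> = Sup B"
  have b0: "0 \<le> \<beta>" unfolding \<beta>_def by (rule cSup_upper2[OF a0B vnorm_nonneg Bbdd])
  have beta: "cmod ((H1 *\<^sub>v p) \<bullet>c q) \<le> \<beta> * vnorm p * vnorm q" if p: "p \<in> V" and q: "q \<in> ocomp N V" for p q
  proof (cases "p = 0\<^sub>v N")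
    case True
    have qc: "q \<in> carrier_vec N" using q ocomp_carrier by auto
    show ?thesis using True H1c qc b0 by (simp add: vnorm_nonneg)
  next
    case False
    have pc: "p \<in> carrier_vec N" using p Vc by auto
    have qc: "q \<in> carrier_vec N" using q ocomp_carrier by auto
    have np: "vnorm p > 0" using vnorm_zero_iff[OF pc] False vnorm_nonneg[of p] by linarith
    define w where "w = (1 / of_real (vnorm p)) \<cdot>\<^sub>v p"
    have wc: "w \<in> carrier_vec N" unfolding w_def using pc by simp
    have wV: "w \<in> V" unfolding w_def using V p unfolding subsp_def by blast
    have nw: "vnorm w = 1" unfolding w_def vnorm_smult[OF pc] using np by (simp add: norm_divide)
    have pw: "p = of_real (vnorm p) \<cdot>\<^sub>v w" unfolding w_def smult_smult_assoc using np by simp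
    define y where "y = H1 *\<^sub>v w"
    have yc: "y \<in> carrier_vec N" unfolding y_def using H1c wc by simp
    have pyV: "proj N V y \<in> V" and r: "y - proj N V y \<in> ocomp N V" using projV[OF V yc] by auto
    have pyc: "proj N V y \<in> carrier_vec N" using pyV Vc by auto
    have rc: "y - proj N V y \<in> carrier_vec N" using yc pyc by simp
    have ye: "y = proj N V y + (y - proj N V y)" by (rule eq_vecI, insert yc pyc, auto)
    have "y \<bullet>c q = proj N V y \<bullet>c q + (y - proj N V y) \<bullet>c q"
      by (subst ye, rule cprod_add_left[OF pyc rc qc])
    also have "proj N V y \<bullet>c q = 0" by (rule ocompD2[OF q pyV Vc])
    finally have yq: "y \<bullet>c q = proj N (ocomp N V) y \<bullet>c q" unfolding projW[OF V yc] by simp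
    have "cmod (y \<bullet>c q) \<le> vnorm (proj N (ocomp N V) y) * vnorm q"
      unfolding yq by (rule cauchy_schwarz[OF _ qc], insert rc projW[OF V yc], simp)
    also have "vnorm (proj N (ocomp N V) y) \<le> \<beta>" unfolding \<beta>_def
      by (rule cSup_upper[OF _ Bbdd], unfold B_def y_def, insert wV nw, blast)
    hence "vnorm (proj N (ocomp N V) y) * vnorm q \<le> \<beta> * vnorm q" by (rule mult_right_mono, simp add: vnorm_nonneg)
    finally have cy: "cmod (y \<bullet>c q) \<le> \<beta> * vnorm q" .
    have "H1 *\<^sub>v p = of_real (vnorm p) \<cdot>\<^sub>v y" unfolding y_def by (subst pw, rule mult_mat_vec[OF H1c wc])
    hence "(H1 *\<^sub>v p) \<bullet>c q = of_real (vnorm p) * (y \<bullet>c q)" using cprod_smult_left[OF yc qc] by simp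
    hence "cmod ((H1 *\<^sub>v p) \<bullet>c q) = vnorm p * cmod (y \<bullet>c q)" using np by (simp add: norm_mult)
    also have "\<dots> \<le> vnorm p * (\<beta> * vnorm q)" by (rule mult_left_mono[OF cy], simp add: vnorm_nonneg)
    finally show ?thesis by (simp add: mult_ac)
  qed
  define Onrm where "Onrm = opnorm (H0 - H1)"
  have Dc: "H0 - H1 \<in> carrier_mat N N" by (rule minus_carrier_mat[OF H1c])
  have bO: "\<beta> \<le> Onrm" unfolding \<beta>_def
  proof (rule cSup_least)
    show "B \<noteq> {}" using a0B by auto
    fix x assume "x \<in> B"
    then obtain v where v: "v \<in> V" "vnorm v = 1" and x: "x = vnorm (proj N (ocomp N V) (H1 *\<^sub>v v))"
      unfolding B_def by blast
    have vc: "v \<in> carrier_vec N" using v Vc by auto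
    define y where "y = H1 *\<^sub>v v"
    have yc: "y \<in> carrier_vec N" unfolding y_def using H1c vc by simp
    have pyV: "proj N V y \<in> V" and r: "y - proj N V y \<in> ocomp N V" using projV[OF V yc] by auto
    have pyc: "proj N V y \<in> carrier_vec N" using pyV Vc by auto
    have rc: "y - proj N V y \<in> carrier_vec N" using yc pyc by simp
    have H0v: "H0 *\<^sub>v v \<in> V" by (rule inv0[OF v(1)])
    have H0vc: "H0 *\<^sub>v v \<in> carrier_vec N" using H0c vc by simp
    define v' where "v' = proj N V y - H0 *\<^sub>v v"
    have v'V: "v' \<in> V" unfolding v'_def by (rule subsp_minus[OF V pyV H0v])
    have v'c: "v' \<in> carrier_vec N" using v'V Vc by auto
    have de: "y - H0 *\<^sub>v v = (y - proj N V y) + v'" unfolding v'_def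
      by (rule eq_vecI, insert yc pyc H0vc H0c, auto)
    have "(vnorm (y - H0 *\<^sub>v v))^2 = (vnorm (y - proj N V y))^2 + (vnorm v')^2"
      unfolding de by (rule pythagoras[OF rc v'c], insert ocompD[OF r v'V])
    hence "(vnorm (y - proj N V y))^2 \<le> (vnorm (y - H0 *\<^sub>v v))^2" by simp
    hence x1: "x \<le> vnorm (y - H0 *\<^sub>v v)" unfolding x y_def[symmetric] projW[OF V yc]
      by (rule power2_le_imp_le, simp add: vnorm_nonneg)
    have "y - H0 *\<^sub>v v = (-1) \<cdot>\<^sub>v ((H0 - H1) *\<^sub>v v)" unfolding y_def
      by (subst minus_mult_distrib_mat_vec[OF H0c H1c vc], rule eq_vecI, insert H0c H1c vc, auto)
    hence "vnorm (y - H0 *\<^sub>v v) = vnorm ((H0 - H1) *\<^sub>v v)"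
      using vnorm_smult[of "(H0 - H1) *\<^sub>v v" N "-1"] Dc vc by simp
    also have "\<dots> \<le> Onrm" unfolding Onrm_def opnorm_def
    proof (rule cSup_upper)
      show "vnorm ((H0 - H1) *\<^sub>v v) \<in> {vnorm ((H0 - H1) *\<^sub>v v) |v. v \<in> carrier_vec (dim_col (H0 - H1)) \<and> vnorm v = 1}"
        using vc v Dc H1c by (intro CollectI exI[of _ v], auto)
      show "bdd_above {vnorm ((H0 - H1) *\<^sub>v v) |v. v \<in> carrier_vec (dim_col (H0 - H1)) \<and> vnorm v = 1}"
      proof (rule bdd_aboveI[of _ "fro (H0 - H1)"])
        fix z assume "z \<in> {vnorm ((H0 - H1) *\<^sub>v v) |v. v \<in> carrier_vec (dim_col (H0 - H1)) \<and> vnorm v = 1}"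
        then obtain u where u: "u \<in> carrier_vec N" "vnorm u = 1" and z: "z = vnorm ((H0 - H1) *\<^sub>v u)"
          using Dc by auto
        show "z \<le> fro (H0 - H1)" using mat_vec_bound[OF Dc u(1)] u z by simp
      qed
    qed
    finally show "x \<le> Onrm" using x1 by simp
  qed
  define p1 where "p1 = proj N V a1"
  have p1V: "p1 \<in> V" and q1W: "a1 - p1 \<in> ocomp N V" unfolding p1_def using projV[OF V a1c] by auto
  have np1: "vnorm p1 \<le> 1/10" unfolding p1_def by (rule pa1')
  have cr: "core N H0 H1 V \<beta> a0 a1 p1"
    by (rule core.intro[OF h0 h1 V inv0 beta b0 a0V na0 ga0 a1c na1 ga1 p1V q1W np1])
  interpret core N H0 H1 V \<beta> a0 a1 p1 by (rule cr)
  have "(INF s\<in>{0..1::real}. lam (interp H0 H1 s) 1 - lam (interp H0 H1 s) 0) \<le> 3 * \<beta>" by (rule main)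
  also have "\<dots> \<le> 3 * (\<beta> * Onrm ^ 3) powr (1/4)" using beta_powr[OF b0 bO] by simp
  finally show "(INF s\<in>{0..1::real}. lam (interp H0 H1 s) 1 - lam (interp H0 H1 s) 0)
         \<le> 3 * (escape_rate (2^n) V H1 * opnorm (H0 - H1) ^ 3) powr (1/4)"
    unfolding esc \<beta>_def[symmetric] Onrm_def[symmetric] .
qed simp

end
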